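(* Let $K$ be a symmetric convex body in $\mathbb R^n$, let $\mu$ be a log-concave probability measure on $\mathbb R^n$, and let $m$ be the median of $x\mapsto\|x\|_K$ with respect to $\mu$. Then: (a) for every $\varepsilon\in(0,1)$, $$\mu(\{x:\|x\|_K\leqslant(1-\varepsilon)m\})\leqslant\frac12\exp(-2\varepsilon\vartheta_\mu(K))\leqslant\frac12\exp\big(-c\varepsilon/\sqrt{\beta_\mu(K)}\big);$$ (b) if moreover the pair $(\mu,K)$ has the B-property and $\mu(K)\leqslant1/2$, then for all $\varepsilon\in(0,1)$ $$\mu(\varepsilon K)\leqslant\varepsilon^{2f_K(m)}\mu(K)\leqslant\varepsilon^{\frac{1}{16\,\mathbb E|\|Z\|_K-m|}}\mu(K),$$ and in particular $\mu(\{x:\|x\|_K\leqslant\varepsilon m\})\leqslant\frac12\varepsilon^{2\vartheta_\mu(K)}\leqslant\frac12\varepsilon^{c/\sqrt{\beta_\mu(K)}}$ for every $\varepsilon\in(0,1)$. Here $c>0$ is an absolute constant.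
   Context: $\|\cdot\|_K$ is the norm with unit ball $K$. $Z$ is a random vector with law $\mu$, $F_K(t)=\mu(\{x:\|x\|_K\leqslant t\})$, $f_K=F_K'$ its density, and $\vartheta_\mu(K)=m f_K(m)$. $\beta_\mu(K)=\mathrm{Var}(\|Z\|_K)/(\mathbb E\|Z\|_K)^2$. The pair $(\mu,K)$ has the B-property if $t\mapsto\mu(e^tK)$ is log-concave on $\mathbb R$. *)

theory Defs
  imports "HOL-Probability.Probability"
begin

text \<open>We model R^n concretely (so that the absolute constant c can be quantified
  outside of the dimension n) as the extensional functions PiE {..<n} (%_. UNIV),
  i.e. the carrier of the standard product Lebesgue measure PiM {..<n} (\<lambda>_. lborel).\<close>

definition Rn :: "nat \<Rightarrow> (nat \<Rightarrow> real) set" where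
  "Rn n = PiE {..<n} (\<lambda>_. UNIV)"

definition LebN :: "nat \<Rightarrow> (nat \<Rightarrow> real) measure" where
  "LebN n = PiM {..<n} (\<lambda>_. lborel)"

definition vplus :: "nat \<Rightarrow> (nat \<Rightarrow> real) \<Rightarrow> (nat \<Rightarrow> real) \<Rightarrow> (nat \<Rightarrow> real)" where
  "vplus n x y = (\<lambda>i\<in>{..<n}. x i + y i)"

definition vscale :: "nat \<Rightarrow> real \<Rightarrow> (nat \<Rightarrow> real) \<Rightarrow> (nat \<Rightarrow> real)" where
  "vscale n t x = (\<lambda>i\<in>{..<n}. t * x i)"

definition convexN :: "nat \<Rightarrow> (nat \<Rightarrow> real) set \<Rightarrow> bool" where
  "convexN n K \<longleftrightarrow> (\<forall>x\<in>K. \<forall>y\<in>K. \<forall>t::real. 0 \<le> t \<and> t \<le> 1 \<longrightarrow>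
      vplus n (vscale n t x) (vscale n (1 - t) y) \<in> K)"

text \<open>Symmetric convex body in R^n: compact, convex, nonempty interior (relative to R^n,
  whose subspace topology in the product topology is the Euclidean one), K = -K.\<close>
definition sym_convex_body :: "nat \<Rightarrow> (nat \<Rightarrow> real) set \<Rightarrow> bool" where
  "sym_convex_body n K \<longleftrightarrow> K \<subseteq> Rn n \<and> compact K \<and> convexN n K \<and>
     (\<exists>U. openin (top_of_set (Rn n)) U \<and> U \<noteq> {} \<and> U \<subseteq> K) \<and>
     (\<forall>x\<in>K. vscale n (-1) x \<in> K)"

definition normK :: "nat \<Rightarrow> (nat \<Rightarrow> real) set \<Rightarrow> (nat \<Rightarrow> real) \<Rightarrow> real" where
  "normK n K x = Inf {t. 0 < t \<and> x \<in> vscale n t ` K}"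

definition minkc :: "nat \<Rightarrow> real \<Rightarrow> (nat \<Rightarrow> real) set \<Rightarrow> (nat \<Rightarrow> real) set \<Rightarrow> (nat \<Rightarrow> real) set" where
  "minkc n l A B = {vplus n (vscale n l a) (vscale n (1 - l) b) | a b. a \<in> A \<and> b \<in> B}"

text \<open>Log-concave probability measure on R^n (Borell's definition, tested on nonempty compact
  sets; equivalent to the Borel-set version by inner regularity).\<close>
definition log_concave_measure :: "nat \<Rightarrow> (nat \<Rightarrow> real) measure \<Rightarrow> bool" where
  "log_concave_measure n \<mu> \<longleftrightarrow> prob_space \<mu> \<and> sets \<mu> = sets (LebN n) \<and>
     (\<forall>A B l. compact A \<and> compact B \<and> A \<noteq> {} \<and> B \<noteq> {} \<and> A \<subseteq> Rn n \<and> B \<subseteq> Rn n \<and>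
        0 < l \<and> l < 1 \<and> A \<in> sets \<mu> \<and> B \<in> sets \<mu> \<and> minkc n l A B \<in> sets \<mu> \<longrightarrow>
        measure \<mu> (minkc n l A B) \<ge> measure \<mu> A powr l * measure \<mu> B powr (1 - l))"

definition log_concave_fun :: "(real \<Rightarrow> real) \<Rightarrow> bool" where
  "log_concave_fun g \<longleftrightarrow> (\<forall>x. 0 \<le> g x) \<and>
     (\<forall>x y l. 0 < l \<and> l < 1 \<longrightarrow> g (l * x + (1 - l) * y) \<ge> g x powr l * g y powr (1 - l))"

definition FK :: "nat \<Rightarrow> (nat \<Rightarrow> real) measure \<Rightarrow> (nat \<Rightarrow> real) set \<Rightarrow> real \<Rightarrow> real" where
  "FK n \<mu> K t = measure \<mu> {x \<in> space \<mu>. normK n K x \<le> t}"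

definition is_median :: "nat \<Rightarrow> (nat \<Rightarrow> real) measure \<Rightarrow> (nat \<Rightarrow> real) set \<Rightarrow> real \<Rightarrow> bool" where
  "is_median n \<mu> K m \<longleftrightarrow> measure \<mu> {x \<in> space \<mu>. normK n K x \<le> m} \<ge> 1/2 \<and>
                            measure \<mu> {x \<in> space \<mu>. normK n K x \<ge> m} \<ge> 1/2"

definition betaK :: "nat \<Rightarrow> (nat \<Rightarrow> real) measure \<Rightarrow> (nat \<Rightarrow> real) set \<Rightarrow> real" where
  "betaK n \<mu> K =
     (let E = (\<integral>x. normK n K x \<partial>\<mu>) in (\<integral>x. (normK n K x - E)\<^sup>2 \<partial>\<mu>) / E\<^sup>2)"

definition B_property :: "nat \<Rightarrow> (nat \<Rightarrow> real) measure \<Rightarrow> (nat \<Rightarrow> real) set \<Rightarrow> bool" where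
  "B_property n \<mu> K \<longleftrightarrow> log_concave_fun (\<lambda>t. measure \<mu> (vscale n (exp t) ` K))"

end

theory Submission
  imports Defs
begin

definition l1 :: "nat \<Rightarrow> (nat \<Rightarrow> real) \<Rightarrow> real" where
  "l1 n x = (\<Sum>i<n. \<bar>x i\<bar>)"

definition zn :: "nat \<Rightarrow> (nat \<Rightarrow> real)" where
  "zn n = (\<lambda>i\<in>{..<n}. 0)"

lemma Rn_iff: "x \<in> Rn n \<longleftrightarrow> (\<forall>i. n \<le> i \<longrightarrow> x i = undefined)"
  by (auto simp: Rn_def PiE_iff extensional_def)

lemma vscale_Rn[simp]: "vscale n t x \<in> Rn n"
  by (auto simp: Rn_iff vscale_def)

lemma vplus_Rn[simp]: "vplus n x y \<in> Rn n"
  by (auto simp: Rn_iff vplus_def)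

lemma zn_Rn[simp]: "zn n \<in> Rn n"
  by (auto simp: Rn_iff zn_def)

lemma vscale_app: "vscale n t x i = (if i < n then t * x i else undefined)"
  by (simp add: vscale_def)

lemma vplus_app: "vplus n x y i = (if i < n then x i + y i else undefined)"
  by (simp add: vplus_def)

lemma zn_app: "zn n i = (if i < n then 0 else undefined)"
  by (simp add: zn_def)

lemma Rn_eqI: "x \<in> Rn n \<Longrightarrow> y \<in> Rn n \<Longrightarrow> (\<And>i. i < n \<Longrightarrow> x i = y i) \<Longrightarrow> x = y"
  unfolding Rn_iff by (rule ext) (metis not_le)

lemma vscale_vscale[simp]: "vscale n a (vscale n b x) = vscale n (a * b) x"
  by (rule Rn_eqI[where n=n]) (auto simp: vscale_app)

lemma vscale_one: "x \<in> Rn n \<Longrightarrow> vscale n 1 x = x"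
  by (rule Rn_eqI) (auto simp: vscale_app)

lemma vscale_zero: "vscale n 0 x = zn n"
  by (rule Rn_eqI[where n=n]) (auto simp: vscale_app zn_app)

lemma l1_vscale: "l1 n (vscale n c x) = \<bar>c\<bar> * l1 n x"
  by (simp add: l1_def vscale_app abs_mult sum_distrib_left)

lemma l1_nonneg: "0 \<le> l1 n x"
  by (simp add: l1_def sum_nonneg)

lemma l1_zn[simp]: "l1 n (zn n) = 0"
  by (simp add: l1_def zn_app)

lemma continuous_on_l1: "continuous_on S (l1 n)"
  unfolding l1_def
  by (intro continuous_intros continuous_on_subset[OF continuous_on_product_coordinates]) auto

lemma continuous_on_vscale: "continuous_on S (vscale n t)"
proof (intro continuous_on_coordinatewise_then_product)
  fix i show "continuous_on S (\<lambda>x. vscale n t x i)"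
  proof (cases "i < n")
    case True
    then show ?thesis unfolding vscale_app
      by (simp, intro continuous_intros continuous_on_subset[OF continuous_on_product_coordinates]) auto
  qed (simp add: vscale_app)
qed

lemma continuous_on_vscale_param: "continuous_on S (\<lambda>c. vscale n c x)"
proof (intro continuous_on_coordinatewise_then_product)
  fix i show "continuous_on S (\<lambda>c. vscale n c x i)"
    unfolding vscale_app by (cases "i < n") (auto intro!: continuous_intros)
qed

lemma Rn_nbhd:
  assumes "openin (top_of_set (Rn n)) U" "u0 \<in> U"
  shows "\<exists>\<delta>>0. \<forall>y\<in>Rn n. (\<Sum>i<n. \<bar>y i - u0 i\<bar>) < \<delta> \<longrightarrow> y \<in> U"
proof -
  obtain V where V: "open V" "U = Rn n \<inter> V"
    using assms(1) by (auto simp: openin_open)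
  have u0: "u0 \<in> V" "u0 \<in> Rn n" using V assms(2) by auto
  have "openin (product_topology (\<lambda>i. euclidean) UNIV) V"
    using V(1) by (simp add: euclidean_product_topology)
  from product_topology_open_contains_basis[OF this u0(1)]
  obtain X where X: "u0 \<in> (\<Pi>\<^sub>E i\<in>UNIV. X i)" "\<forall>i. open (X i)"
    "finite {i. X i \<noteq> UNIV}" "(\<Pi>\<^sub>E i\<in>UNIV. X i) \<subseteq> V"
    by auto
  define F where "F = {i. X i \<noteq> UNIV}"
  have "\<forall>i\<in>F. \<exists>d>0. ball (u0 i) d \<subseteq> X i"
    using X(1,2) by (auto simp: open_contains_ball PiE_iff)
  then obtain d where d: "\<And>i. i \<in> F \<Longrightarrow> d i > 0 \<and> ball (u0 i) (d i) \<subseteq> X i"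
    by metis
  define \<delta> where "\<delta> = Min (insert 1 (d ` F))"
  have fin: "finite (insert 1 (d ` F))" using X(3) F_def by auto
  have dpos: "\<delta> > 0" unfolding \<delta>_def using fin d by (subst Min_gr_iff) auto
  have dle: "\<delta> \<le> d i" if "i \<in> F" for i unfolding \<delta>_def using fin that by auto
  show ?thesis
  proof (intro exI[of _ \<delta>] conjI dpos ballI impI)
    fix y assume y: "y \<in> Rn n" "(\<Sum>i<n. \<bar>y i - u0 i\<bar>) < \<delta>"
    have "y i \<in> X i" for i
    proof (cases "i < n")
      case True
      have "\<bar>y i - u0 i\<bar> \<le> (\<Sum>i<n. \<bar>y i - u0 i\<bar>)"
        using True by (intro member_le_sum) auto
      then have lt: "\<bar>y i - u0 i\<bar> < \<delta>" using y(2) by linarith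
      show ?thesis
      proof (cases "i \<in> F")
        case True
        with lt dle d have "y i \<in> ball (u0 i) (d i)" by (force simp: dist_real_def abs_minus_commute)
        then show ?thesis using d[OF True] by blast
      next
        case False then show ?thesis by (auto simp: F_def)
      qed
    next
      case False
      then have "y i = u0 i" using y(1) u0(2) by (auto simp: Rn_iff)
      then show ?thesis using X(1) by (auto simp: PiE_iff)
    qed
    then have "y \<in> V" using X(4) by (auto simp: PiE_iff)
    then show "y \<in> U" using V y by auto
  qed
qed

locale scb =
  fixes n :: nat and K :: "(nat \<Rightarrow> real) set"
  assumes scb: "sym_convex_body n K"
begin

lemma K_sub: "K \<subseteq> Rn n" and K_compact: "compact K"
  and K_neg: "x \<in> K \<Longrightarrow> vscale n (-1) x \<in> K"
  using scb by (auto simp: sym_convex_body_def)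

lemma K_conv: "x \<in> K \<Longrightarrow> y \<in> K \<Longrightarrow> 0 \<le> t \<Longrightarrow> t \<le> 1 \<Longrightarrow> vplus n (vscale n t x) (vscale n (1 - t) y) \<in> K"
  using scb by (auto simp: sym_convex_body_def convexN_def)

lemma K_ne: "K \<noteq> {}"
  using scb by (auto simp: sym_convex_body_def)

lemma zn_K: "zn n \<in> K"
proof -
  obtain x where x: "x \<in> K" using K_ne by auto
  have "vplus n (vscale n (1/2) x) (vscale n (1 - 1/2) (vscale n (-1) x)) \<in> K"
    by (intro K_conv x K_neg) auto
  also have "vplus n (vscale n (1/2) x) (vscale n (1 - 1/2) (vscale n (-1) x)) = zn n"
    by (rule Rn_eqI[where n=n]) (auto simp: vplus_app vscale_app zn_app)
  finally show ?thesis .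
qed

lemma K_scale: "x \<in> K \<Longrightarrow> 0 \<le> t \<Longrightarrow> t \<le> 1 \<Longrightarrow> vscale n t x \<in> K"
proof -
  assume a: "x \<in> K" "0 \<le> t" "t \<le> 1"
  have "vplus n (vscale n t x) (vscale n (1 - t) (zn n)) \<in> K"
    by (intro K_conv a zn_K)
  also have "vplus n (vscale n t x) (vscale n (1 - t) (zn n)) = vscale n t x"
    by (rule Rn_eqI[where n=n]) (auto simp: vplus_app vscale_app zn_app)
  finally show ?thesis .
qed

lemma box_ex: "\<exists>r>0. \<forall>y\<in>Rn n. l1 n y \<le> r \<longrightarrow> y \<in> K"
proof -
  obtain U where U: "openin (top_of_set (Rn n)) U" "U \<noteq> {}" "U \<subseteq> K"
    using scb by (auto simp: sym_convex_body_def)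
  obtain u0 where u0: "u0 \<in> U" using U(2) by auto
  have u0R: "u0 \<in> Rn n" using u0 U(3) K_sub by auto
  obtain \<delta> where d: "\<delta> > 0" "\<forall>y\<in>Rn n. (\<Sum>i<n. \<bar>y i - u0 i\<bar>) < \<delta> \<longrightarrow> y \<in> U"
    using Rn_nbhd[OF U(1) u0] by auto
  show ?thesis
  proof (intro exI[of _ "\<delta>/2"] conjI ballI impI)
    show "\<delta>/2 > 0" using d by auto
    fix y assume y: "y \<in> Rn n" "l1 n y \<le> \<delta>/2"
    have "(\<Sum>i<n. \<bar>vplus n u0 y i - u0 i\<bar>) = l1 n y"
      by (simp add: l1_def vplus_app)
    then have y1: "vplus n u0 y \<in> K" using d y U(3) by auto
    have "(\<Sum>i<n. \<bar>vplus n u0 (vscale n (-1) y) i - u0 i\<bar>) = l1 n y"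
      by (simp add: l1_def vplus_app vscale_app)
    then have y2: "vplus n u0 (vscale n (-1) y) \<in> K" using d y U(3) by auto
    have "vplus n (vscale n (1/2) (vplus n u0 y)) (vscale n (1 - 1/2) (vscale n (-1) (vplus n u0 (vscale n (-1) y)))) \<in> K"
      by (intro K_conv y1 K_neg y2) auto
    also have "vplus n (vscale n (1/2) (vplus n u0 y)) (vscale n (1 - 1/2) (vscale n (-1) (vplus n u0 (vscale n (-1) y)))) = y"
      by (rule Rn_eqI[where n=n]) (use y(1) in \<open>auto simp: vplus_app vscale_app field_simps\<close>)
    finally show "y \<in> K" .
  qed
qed

lemma bnd_ex: "\<exists>R>0. \<forall>x\<in>K. l1 n x \<le> R"
proof -
  have "compact (l1 n ` K)"
    by (intro compact_continuous_image continuous_on_l1 K_compact)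
  then obtain B where "\<forall>x\<in>K. \<bar>l1 n x\<bar> \<le> B"
    by (auto dest!: compact_imp_bounded simp: bounded_real)
  then show ?thesis by (intro exI[of _ "max B 1"]) force
qed

definition "rr = (SOME r. r > 0 \<and> (\<forall>y\<in>Rn n. l1 n y \<le> r \<longrightarrow> y \<in> K))"
definition "RR = (SOME R. R > 0 \<and> (\<forall>x\<in>K. l1 n x \<le> R))"

lemma rr: "rr > 0" "y \<in> Rn n \<Longrightarrow> l1 n y \<le> rr \<Longrightarrow> y \<in> K"
  using someI_ex[OF box_ex] unfolding rr_def by auto

lemma RR: "RR > 0" "x \<in> K \<Longrightarrow> l1 n x \<le> RR"
  using someI_ex[OF bnd_ex] unfolding RR_def by auto

lemma in_tK_iff: "t > 0 \<Longrightarrow> x \<in> vscale n t ` K \<longleftrightarrow> x \<in> Rn n \<and> vscale n (1/t) x \<in> K"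
proof
  assume t: "t > 0" and "x \<in> vscale n t ` K"
  then obtain k where k: "k \<in> K" "x = vscale n t k" by auto
  have "vscale n (1/t) x = k" using k t K_sub by (auto simp: vscale_one)
  then show "x \<in> Rn n \<and> vscale n (1/t) x \<in> K" using k by auto
next
  assume t: "t > 0" and x: "x \<in> Rn n \<and> vscale n (1/t) x \<in> K"
  have "vscale n t (vscale n (1/t) x) = x" using t x by (simp add: vscale_one)
  then show "x \<in> vscale n t ` K" using x by (metis image_eqI)
qed

lemma in_tK_l1: "x \<in> Rn n \<Longrightarrow> t > 0 \<Longrightarrow> l1 n x \<le> t * rr \<Longrightarrow> x \<in> vscale n t ` K"
  by (subst in_tK_iff) (auto intro!: rr(2) simp: l1_vscale field_simps)

lemma in_tK_mono: "x \<in> vscale n s ` K \<Longrightarrow> 0 < s \<Longrightarrow> s \<le> t \<Longrightarrow> x \<in> vscale n t ` K"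
proof -
  assume a: "x \<in> vscale n s ` K" "0 < s" "s \<le> t"
  then have x: "x \<in> Rn n" "vscale n (1/s) x \<in> K" using in_tK_iff[of s x] by blast+
  have "vscale n (s/t) (vscale n (1/s) x) \<in> K" by (rule K_scale[OF x(2)]) (use a in auto)
  moreover have "(s/t)*(1/s) = 1/t" using a by auto
  ultimately have "vscale n (1/t) x \<in> K" by simp
  then show ?thesis using a(2,3) x by (subst in_tK_iff) auto
qed

lemma in_tK_bound: "x \<in> vscale n t ` K \<Longrightarrow> t > 0 \<Longrightarrow> l1 n x \<le> t * RR"
proof -
  assume a: "x \<in> vscale n t ` K" "t > 0"
  then obtain k where "k \<in> K" "x = vscale n t k" by auto
  then show ?thesis using RR(2)[of k] a by (auto simp: l1_vscale)
qed

lemma normK_set_ne: "x \<in> Rn n \<Longrightarrow> l1 n x / rr + 1 \<in> {t. 0 < t \<and> x \<in> vscale n t ` K}"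
  using rr(1) l1_nonneg[of n x]
  by (auto intro!: in_tK_l1 add_pos_nonneg simp: field_simps)

lemma normK_nonneg: "x \<in> Rn n \<Longrightarrow> 0 \<le> normK n K x"
  unfolding normK_def
proof (rule cInf_greatest)
  assume "x \<in> Rn n"
  from normK_set_ne[OF this] show "{t. 0 < t \<and> x \<in> vscale n t ` K} \<noteq> {}" by blast
qed auto

lemma normK_le_iff: assumes x: "x \<in> Rn n" and t: "t > 0"
  shows "normK n K x \<le> t \<longleftrightarrow> x \<in> vscale n t ` K"
proof
  assume "x \<in> vscale n t ` K"
  then show "normK n K x \<le> t" unfolding normK_def
    using t by (intro cInf_lower) (auto intro: bdd_belowI[of _ 0])
next
  define S where "S = {t. 0 < t \<and> x \<in> vscale n t ` K}"
  assume le: "normK n K x \<le> t"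
  have Sne: "S \<noteq> {}" using normK_set_ne[OF x] unfolding S_def by blast
  have inS: "s \<in> S" if "s > t" for s
  proof -
    have "Inf S < s" using le that unfolding normK_def S_def by auto
    then obtain u where "u \<in> S" "u < s" using cInf_lessD[OF Sne] by blast
    then show ?thesis using in_tK_mono[of x u s] that t unfolding S_def by auto
  qed
  have C: "closed {c. vscale n c x \<in> K}"
    using continuous_closed_vimage[OF compact_imp_closed[OF K_compact], of "\<lambda>c. vscale n c x"]
      continuous_on_vscale_param[of UNIV n x]
    by (auto simp: continuous_on_eq_continuous_at vimage_def)
  define c where "c k = (1 - inverse (real (Suc k)) / 2) / t" for k :: nat
  have ck: "c k \<in> {c. vscale n c x \<in> K}" for k
  proof -
    have "inverse (real (Suc k)) \<le> 1" "0 < inverse (real (Suc k))" by (auto simp: field_simps)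
    then have h: "0 < 1 - inverse (real (Suc k)) / 2" "1 - inverse (real (Suc k)) / 2 < 1"
      by auto
    have cpos: "c k > 0" using h t unfolding c_def by (intro divide_pos_pos) auto
    have clt: "c k < 1/t" using h t unfolding c_def by (intro divide_strict_right_mono) auto
    then have "1 / c k > t" using t cpos by (auto simp: field_simps)
    then have "1 / c k \<in> S" by (rule inS)
    then have xin: "x \<in> vscale n (1 / c k) ` K" by (simp add: S_def)
    have "0 < 1 / c k" using cpos by simp
    then have "vscale n (1 / (1 / c k)) x \<in> K" using in_tK_iff[of "1 / c k" x] xin by blast
    then show ?thesis using cpos by simp
  qed
  note l0 = LIMSEQ_inverse_real_of_nat
  have "c \<longlonglongrightarrow> (1 - 0 / 2) / t"
    unfolding c_def using t by (intro tendsto_intros l0) auto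
  then have "vscale n (1/t) x \<in> K" using closed_sequentially[OF C ck] by auto
  then show "x \<in> vscale n t ` K" using t x by (subst in_tK_iff) auto
qed

end

lemma eq_from_le_iff:
  fixes a b :: real
  assumes "0 \<le> a" "0 \<le> b" "\<And>t. t > 0 \<Longrightarrow> a \<le> t \<longleftrightarrow> b \<le> t"
  shows "a = b"
proof (rule ccontr)
  assume "a \<noteq> b"
  then consider "a < b" | "b < a" by linarith
  then show False
  proof cases
    case 1
    then have "a \<le> (a+b)/2" "\<not> b \<le> (a+b)/2" "(a+b)/2 > 0" using assms by auto
    then show False using assms(3) by blast
  next
    case 2
    then have "b \<le> (a+b)/2" "\<not> a \<le> (a+b)/2" "(a+b)/2 > 0" using assms by auto
    then show False using assms(3) by blast
  qed
qed

lemma comb_eq: fixes a b u v :: real assumes "a > 0" "b > 0"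
  shows "a / (a + b) * (1 / a * u) + (1 - a / (a + b)) * (1 / b * v) = 1 / (a + b) * (u + v)"
proof -
  have e: "1 - a / (a + b) = b / (a + b)" using assms by (simp add: field_simps)
  have 1: "a / (a + b) * (1 / a * u) = u / (a + b)" using assms by simp
  have 2: "(1 - a / (a + b)) * (1 / b * v) = v / (a + b)" using assms by (simp add: e)
  show ?thesis unfolding 1 2 by (simp add: add_divide_distrib[symmetric])
qed

context scb begin

lemma normK_le_l1: assumes x: "x \<in> Rn n" shows "normK n K x \<le> l1 n x / rr"
proof (cases "l1 n x > 0")
  case True
  then have "x \<in> vscale n (l1 n x / rr) ` K" using rr(1) x by (intro in_tK_l1) auto
  then show ?thesis using normK_le_iff[OF x] True rr(1) by auto
next
  case False
  then have l0: "l1 n x = 0" using l1_nonneg[of n x] by auto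
  have "normK n K x \<le> 0 + e" if "e > 0" for e
  proof -
    have "x \<in> vscale n e ` K" using that x l0 rr(1) by (intro in_tK_l1) auto
    then show ?thesis using normK_le_iff[OF x that] by auto
  qed
  then have "normK n K x \<le> 0" by (rule field_le_epsilon)
  then show ?thesis using l0 by auto
qed

lemma l1_le_normK: assumes x: "x \<in> Rn n" shows "l1 n x \<le> RR * normK n K x"
proof -
  have "l1 n x \<le> RR * normK n K x + e" if e: "e > 0" for e
  proof -
    define t where "t = normK n K x + e / RR"
    have eR: "e / RR > 0" using e RR(1) by simp
    then have t: "t > 0" using normK_nonneg[OF x] by (simp add: t_def add_nonneg_pos)
    have "x \<in> vscale n t ` K" using normK_le_iff[OF x t] eR by (auto simp: t_def)
    then have "l1 n x \<le> t * RR" using t by (rule in_tK_bound)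
    also have "\<dots> = RR * normK n K x + e" using RR(1) by (simp add: t_def field_simps)
    finally show ?thesis .
  qed
  then show ?thesis by (rule field_le_epsilon)
qed

lemma normK_zn: "normK n K (zn n) = 0"
  using normK_le_l1[of "zn n"] normK_nonneg[of "zn n"] by simp

lemma normK_triangle: assumes x: "x \<in> Rn n" and y: "y \<in> Rn n"
  shows "normK n K (vplus n x y) \<le> normK n K x + normK n K y"
proof -
  have "normK n K (vplus n x y) \<le> normK n K x + normK n K y + e" if e: "e > 0" for e
  proof -
    define a where "a = normK n K x + e/2"
    define b where "b = normK n K y + e/2"
    have a: "a > 0" and b: "b > 0" using normK_nonneg[OF x] normK_nonneg[OF y] e
      by (auto simp: a_def b_def)
    have "x \<in> vscale n a ` K" using normK_le_iff[OF x a] e by (simp add: a_def)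
    then have xa: "vscale n (1/a) x \<in> K" using in_tK_iff[OF a] by blast
    have "y \<in> vscale n b ` K" using normK_le_iff[OF y b] e by (simp add: b_def)
    then have yb: "vscale n (1/b) y \<in> K" using in_tK_iff[OF b] by blast
    have "vplus n (vscale n (a/(a+b)) (vscale n (1/a) x)) (vscale n (1 - a/(a+b)) (vscale n (1/b) y)) \<in> K"
      using a b by (intro K_conv xa yb) auto
    also have "vplus n (vscale n (a/(a+b)) (vscale n (1/a) x)) (vscale n (1 - a/(a+b)) (vscale n (1/b) y))
        = vscale n (1/(a+b)) (vplus n x y)"
    proof (intro Rn_eqI[where n=n])
      fix i assume i: "i < n"
      show "vplus n (vscale n (a/(a+b)) (vscale n (1/a) x)) (vscale n (1 - a/(a+b)) (vscale n (1/b) y)) i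
        = vscale n (1/(a+b)) (vplus n x y) i"
        unfolding vplus_app vscale_app if_P[OF i] by (rule comb_eq[OF a b])
    qed auto
    finally have "vplus n x y \<in> vscale n (a+b) ` K" using a b by (subst in_tK_iff) auto
    then have "normK n K (vplus n x y) \<le> a + b" using normK_le_iff[of "vplus n x y" "a+b"] a b by auto
    then show ?thesis by (simp add: a_def b_def)
  qed
  then show ?thesis by (rule field_le_epsilon)
qed

lemma normK_scale_pos: assumes x: "x \<in> Rn n" and c: "c > 0"
  shows "normK n K (vscale n c x) = c * normK n K x"
proof (rule eq_from_le_iff)
  show "0 \<le> normK n K (vscale n c x)" by (rule normK_nonneg) simp
  show "0 \<le> c * normK n K x" using c normK_nonneg[OF x] by simp
  fix t :: real assume t: "t > 0"
  have tc: "t / c > 0" using t c by simp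
  have "normK n K (vscale n c x) \<le> t \<longleftrightarrow> vscale n c x \<in> vscale n t ` K"
    using t by (intro normK_le_iff) auto
  also have "\<dots> \<longleftrightarrow> vscale n (c/t) x \<in> K" using t by (subst in_tK_iff) auto
  also have "\<dots> \<longleftrightarrow> x \<in> vscale n (t/c) ` K" using tc x by (subst in_tK_iff) auto
  also have "\<dots> \<longleftrightarrow> normK n K x \<le> t / c" using normK_le_iff[OF x tc] by simp
  also have "\<dots> \<longleftrightarrow> c * normK n K x \<le> t" using c by (simp add: field_simps)
  finally show "normK n K (vscale n c x) \<le> t \<longleftrightarrow> c * normK n K x \<le> t" .
qed

lemma normK_neg: assumes x: "x \<in> Rn n"
  shows "normK n K (vscale n (-1) x) = normK n K x"
proof (rule eq_from_le_iff)
  show "0 \<le> normK n K (vscale n (-1) x)" by (rule normK_nonneg) simp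
  show "0 \<le> normK n K x" using normK_nonneg[OF x] by simp
  fix t :: real assume t: "t > 0"
  have "vscale n (-1) (vscale n (-1/t) x) = vscale n (1/t) x" by simp
  moreover have "vscale n (-1) (vscale n (1/t) x) = vscale n (-1/t) x" by simp
  ultimately have "vscale n (-1/t) x \<in> K \<longleftrightarrow> vscale n (1/t) x \<in> K"
    using K_neg by metis
  then show "normK n K (vscale n (-1) x) \<le> t \<longleftrightarrow> normK n K x \<le> t"
    using t x by (simp add: normK_le_iff in_tK_iff)
qed

lemma normK_scale: assumes x: "x \<in> Rn n"
  shows "normK n K (vscale n c x) = \<bar>c\<bar> * normK n K x"
proof -
  consider "c > 0" | "c = 0" | "c < 0" by linarith
  then show ?thesis
  proof cases
    case 1 then show ?thesis using normK_scale_pos[OF x] by simp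
  next
    case 2 then show ?thesis by (simp add: vscale_zero normK_zn)
  next
    case 3
    have "normK n K (vscale n c x) = normK n K (vscale n (-c) x)"
      using normK_neg[of "vscale n (-c) x"] by simp
    then show ?thesis using 3 normK_scale_pos[OF x, of "-c"] by simp
  qed
qed

lemma normK_diff: assumes x: "x \<in> Rn n" and y: "y \<in> Rn n"
  shows "\<bar>normK n K y - normK n K x\<bar> \<le> (\<Sum>i<n. \<bar>y i - x i\<bar>) / rr"
proof -
  define w where "w = vplus n y (vscale n (-1) x)"
  have w: "w \<in> Rn n" by (simp add: w_def)
  have lw: "l1 n w = (\<Sum>i<n. \<bar>y i - x i\<bar>)" by (simp add: w_def l1_def vplus_app vscale_app)
  have "y = vplus n x w" using y by (intro Rn_eqI[where n=n]) (auto simp: w_def vplus_app vscale_app)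
  then have 1: "normK n K y \<le> normK n K x + normK n K w" using normK_triangle[OF x w] by simp
  have "x = vplus n y (vscale n (-1) w)" using x by (intro Rn_eqI[where n=n]) (auto simp: w_def vplus_app vscale_app)
  then have 2: "normK n K x \<le> normK n K y + normK n K w"
    using normK_triangle[OF y, of "vscale n (-1) w"] normK_neg[OF w] by simp
  have "normK n K w \<le> l1 n w / rr" by (rule normK_le_l1[OF w])
  then show ?thesis using 1 2 lw by auto
qed

lemma normK_cont: "continuous_on (Rn n) (normK n K)"
  unfolding continuous_on_topological
proof (intro ballI allI impI)
  fix x B assume x: "x \<in> Rn n" and B: "open B" "normK n K x \<in> B"
  obtain e where e: "e > 0" "ball (normK n K x) e \<subseteq> B" using B open_contains_ball by blast
  define A where "A = {y. (\<Sum>i<n. \<bar>y i - x i\<bar>) < e * rr}"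
  have "open A" unfolding A_def
    by (intro open_Collect_less continuous_intros continuous_on_subset[OF continuous_on_product_coordinates]) auto
  moreover have "x \<in> A" using e rr(1) by (simp add: A_def)
  moreover have "normK n K y \<in> B" if "y \<in> Rn n" "y \<in> A" for y
  proof -
    have "\<bar>normK n K y - normK n K x\<bar> \<le> (\<Sum>i<n. \<bar>y i - x i\<bar>) / rr" by (rule normK_diff[OF x that(1)])
    also have "\<dots> < e" using that(2) rr(1) by (simp add: A_def field_simps)
    finally have "normK n K y \<in> ball (normK n K x) e" by (simp add: dist_real_def)
    then show ?thesis using e by auto
  qed
  ultimately show "\<exists>A. open A \<and> x \<in> A \<and> (\<forall>y\<in>Rn n. y \<in> A \<longrightarrow> normK n K y \<in> B)" by blast
qed

lemma tK_compact: "compact (vscale n t ` K)"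
  by (intro compact_continuous_image continuous_on_vscale K_compact)

lemma tK_sub: "vscale n t ` K \<subseteq> Rn n" by auto

lemma ann_eq: assumes b: "b > 0"
  shows "{x\<in>Rn n. a \<le> normK n K x \<and> normK n K x \<le> b} = vscale n b ` K \<inter> normK n K -` {a..b}"
  using normK_le_iff[OF _ b] tK_sub by auto

lemma ann_compact: assumes b: "b > 0"
  shows "compact {x\<in>Rn n. a \<le> normK n K x \<and> normK n K x \<le> b}"
  unfolding ann_eq[OF b]
  by (rule closedin_compact[OF tK_compact continuous_closedin_preimage])
     (auto intro: continuous_on_subset[OF normK_cont])

end

lemma space_LebN: "space (LebN n) = Rn n"
  by (simp add: LebN_def Rn_def space_PiM)

lemma id_LebN_meas: "(\<lambda>x. x) \<in> borel_measurable (LebN n)"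
proof (rule measurable_coordinatewise_then_product)
  fix i
  show "(\<lambda>x. x i) \<in> borel_measurable (LebN n)"
  proof (cases "i < n")
    case True
    have "(\<lambda>x. x i) \<in> measurable (LebN n) lborel"
      unfolding LebN_def using True by (intro measurable_component_singleton) auto
    then show ?thesis by (simp add: measurable_lborel2)
  next
    case False
    have "(\<lambda>x. undefined :: real) \<in> borel_measurable (LebN n)" by simp
    then show ?thesis
      by (rule measurable_cong[THEN iffD1, rotated]) (use False in \<open>auto simp: space_LebN Rn_iff\<close>)
  qed
qed

lemma closed_sets_LebN: "closed S \<Longrightarrow> S \<subseteq> Rn n \<Longrightarrow> S \<in> sets (LebN n)"
proof -
  assume S: "closed S" "S \<subseteq> Rn n"
  have "(\<lambda>x. x) -` S \<inter> space (LebN n) \<in> sets (LebN n)"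
    using measurable_sets[OF id_LebN_meas borel_closed[OF S(1)]] .
  then show ?thesis using S(2) by (simp add: space_LebN Int_absorb2)
qed

lemma cont_fst_coord: "continuous_on S (\<lambda>p::(nat\<Rightarrow>real)\<times>(nat\<Rightarrow>real). fst p i)"
  by (rule continuous_on_compose2[OF continuous_on_product_coordinates continuous_on_fst[OF continuous_on_id]]) auto

lemma cont_snd_coord: "continuous_on S (\<lambda>p::(nat\<Rightarrow>real)\<times>(nat\<Rightarrow>real). snd p i)"
  by (rule continuous_on_compose2[OF continuous_on_product_coordinates continuous_on_snd[OF continuous_on_id]]) auto

lemma minkc_eq: "minkc n l A B = (\<lambda>p. vplus n (vscale n l (fst p)) (vscale n (1 - l) (snd p))) ` (A \<times> B)"
  unfolding minkc_def image_def by force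

lemma minkc_compact: "compact A \<Longrightarrow> compact B \<Longrightarrow> compact (minkc n l A B)"
  unfolding minkc_eq
proof (intro compact_continuous_image compact_Times continuous_on_coordinatewise_then_product)
  fix i
  show "continuous_on (A \<times> B) (\<lambda>p. vplus n (vscale n l (fst p)) (vscale n (1 - l) (snd p)) i)"
    unfolding vplus_app vscale_app
    by (cases "i < n") (auto intro!: continuous_intros cont_fst_coord cont_snd_coord)
qed

lemma minkc_Rn: "minkc n l A B \<subseteq> Rn n"
  by (auto simp: minkc_def)

locale lcm = scb +
  fixes \<mu> m f
  assumes lcm: "log_concave_measure n \<mu>"
    and med: "is_median n \<mu> K m"
    and der: "(FK n \<mu> K has_real_derivative f) (at m)"
begin

lemma prob: "prob_space \<mu>" and sets_mu: "sets \<mu> = sets (LebN n)"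
  using lcm by (auto simp: log_concave_measure_def)

interpretation P: prob_space \<mu> by (rule prob)

lemma lc_ineq: "compact A \<Longrightarrow> compact B \<Longrightarrow> A \<noteq> {} \<Longrightarrow> B \<noteq> {} \<Longrightarrow> A \<subseteq> Rn n \<Longrightarrow> B \<subseteq> Rn n
  \<Longrightarrow> 0 < l \<Longrightarrow> l < 1 \<Longrightarrow> A \<in> sets \<mu> \<Longrightarrow> B \<in> sets \<mu> \<Longrightarrow> minkc n l A B \<in> sets \<mu>
  \<Longrightarrow> measure \<mu> A powr l * measure \<mu> B powr (1 - l) \<le> measure \<mu> (minkc n l A B)"
  using lcm unfolding log_concave_measure_def by blast

lemma space_mu: "space \<mu> = Rn n"
  using sets_eq_imp_space_eq[OF sets_mu] by (simp add: space_LebN)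

lemma compact_sets: "compact S \<Longrightarrow> S \<subseteq> Rn n \<Longrightarrow> S \<in> sets \<mu>"
  unfolding sets_mu by (intro closed_sets_LebN compact_imp_closed)

lemma tK_sets: "vscale n t ` K \<in> sets \<mu>"
  by (intro compact_sets tK_compact) auto

lemma normK_le0: "x \<in> Rn n \<Longrightarrow> normK n K x \<le> 0 \<longleftrightarrow> x = zn n"
proof
  assume x: "x \<in> Rn n" "normK n K x \<le> 0"
  then have "l1 n x \<le> 0" using l1_le_normK[OF x(1)] RR(1) by (smt (verit) mult_nonneg_nonpos)
  then have "l1 n x = 0" using l1_nonneg[of n x] by simp
  then have "\<forall>i<n. x i = 0" unfolding l1_def
    by (subst (asm) sum_nonneg_eq_0_iff) auto
  then show "x = zn n" using x by (intro Rn_eqI[where n=n]) (auto simp: zn_app)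
qed (simp add: normK_zn)

lemma normK_meas[measurable]: "normK n K \<in> borel_measurable \<mu>"
  unfolding borel_measurable_iff_le
proof
  fix a :: real
  consider "a < 0" | "a = 0" | "a > 0" by linarith
  then show "{w \<in> space \<mu>. normK n K w \<le> a} \<in> sets \<mu>"
  proof cases
    case 1
    then have "{w \<in> space \<mu>. normK n K w \<le> a} = {}"
      using normK_nonneg by (force simp: space_mu)
    then show ?thesis by (subst \<open>_ = {}\<close>) simp
  next
    case 2
    then have "{w \<in> space \<mu>. normK n K w \<le> a} = {zn n}"
      using normK_le0 by (auto simp: space_mu)
    then show ?thesis by (metis compact_sets compact_sing empty_subsetI insert_subset zn_Rn)
  next
    case 3
    then have "{w \<in> space \<mu>. normK n K w \<le> a} = vscale n a ` K"
      using normK_le_iff[OF _ 3] tK_sub by (auto simp: space_mu)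
    then show ?thesis using tK_sets by simp
  qed
qed

lemma normK_sets[measurable]: "{x \<in> space \<mu>. P (normK n K x)} \<in> sets \<mu>" if "Measurable.pred borel P"
  using that by measurable

lemma FK_eq: "t > 0 \<Longrightarrow> FK n \<mu> K t = measure \<mu> (vscale n t ` K)"
  unfolding FK_def using normK_le_iff tK_sub
  by (intro arg_cong[where f="measure \<mu>"]) (auto simp: space_mu)

lemma FK_neg: "t < 0 \<Longrightarrow> FK n \<mu> K t = 0"
proof -
  assume "t < 0"
  then have "{x \<in> space \<mu>. normK n K x \<le> t} = {}"
    using normK_nonneg by (force simp: space_mu)
  then show ?thesis unfolding FK_def by (subst \<open>_ = {}\<close>) simp
qed

lemma FK_mono: "s \<le> t \<Longrightarrow> FK n \<mu> K s \<le> FK n \<mu> K t"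
  unfolding FK_def by (intro P.finite_measure_mono) auto

lemma FK_nonneg: "0 \<le> FK n \<mu> K t" by (simp add: FK_def)
lemma FK_le1: "FK n \<mu> K t \<le> 1" by (simp add: FK_def)

lemma minkc_tK: assumes s: "s > 0" and t: "t > 0" and l: "0 < l" "l < 1"
  shows "minkc n l (vscale n s ` K) (vscale n t ` K) \<subseteq> vscale n (l * s + (1 - l) * t) ` K"
proof
  fix z assume "z \<in> minkc n l (vscale n s ` K) (vscale n t ` K)"
  then obtain k1 k2 where k: "k1 \<in> K" "k2 \<in> K"
    "z = vplus n (vscale n l (vscale n s k1)) (vscale n (1 - l) (vscale n t k2))"
    by (auto simp: minkc_def)
  define u where "u = l * s + (1 - l) * t"
  have u: "u > 0" using s t l by (auto simp: u_def intro: add_pos_pos)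
  have "vplus n (vscale n (l * s / u) k1) (vscale n (1 - l * s / u) k2) \<in> K"
    using s t l u by (intro K_conv k) (auto simp: u_def field_simps)
  also have "vplus n (vscale n (l * s / u) k1) (vscale n (1 - l * s / u) k2) = vscale n (1/u) z"
  proof (intro Rn_eqI[where n=n])
    fix i assume i: "i < n"
    have e: "1 - l * s / u = (1 - l) * t / u" using u by (simp add: u_def field_simps)
    show "vplus n (vscale n (l * s / u) k1) (vscale n (1 - l * s / u) k2) i = vscale n (1/u) z i"
      unfolding k(3) vplus_app vscale_app if_P[OF i] e
      using u by (simp add: add_divide_distrib[symmetric] algebra_simps)
  qed auto
  finally show "z \<in> vscale n (l * s + (1 - l) * t) ` K"
    using u by (subst in_tK_iff) (auto simp: u_def k(3))
qed

lemma FK_logconc: assumes s: "s > 0" and t: "t > 0" and l: "0 < l" "l < 1"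
  shows "FK n \<mu> K s powr l * FK n \<mu> K t powr (1 - l) \<le> FK n \<mu> K (l * s + (1 - l) * t)"
proof -
  have u: "l * s + (1 - l) * t > 0" using s t l by (auto intro: add_pos_pos)
  have mc: "minkc n l (vscale n s ` K) (vscale n t ` K) \<in> sets \<mu>"
    by (intro compact_sets minkc_compact tK_compact minkc_Rn)
  have "measure \<mu> (vscale n s ` K) powr l * measure \<mu> (vscale n t ` K) powr (1 - l)
      \<le> measure \<mu> (minkc n l (vscale n s ` K) (vscale n t ` K))"
    using l mc tK_sets K_ne by (intro lc_ineq tK_compact) auto
  also have "\<dots> \<le> measure \<mu> (vscale n (l * s + (1 - l) * t) ` K)"
    by (intro P.finite_measure_mono minkc_tK s t l tK_sets)
  finally show ?thesis using FK_eq s t u by simp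
qed

lemma ann_ineq: assumes s: "s > 0" and T: "0 < T" "T \<le> T'"
  shows "sqrt (measure \<mu> {x \<in> space \<mu>. T \<le> normK n K x \<and> normK n K x \<le> T'} * FK n \<mu> K s)
     \<le> measure \<mu> {x \<in> space \<mu>. (T - s)/2 \<le> normK n K x \<and> normK n K x \<le> (T' + s)/2}"
proof (cases "{x \<in> space \<mu>. T \<le> normK n K x \<and> normK n K x \<le> T'} = {}")
  case True then show ?thesis unfolding True by simp
next
  case False
  define A where "A = vscale n s ` K"
  define B where "B = {x \<in> space \<mu>. T \<le> normK n K x \<and> normK n K x \<le> T'}"
  have B: "compact B" "B \<subseteq> Rn n" "B \<noteq> {}"
    using ann_compact[of T' T] T False by (auto simp: B_def space_mu)
  have A: "compact A" "A \<subseteq> Rn n" "A \<noteq> {}" using tK_compact K_ne by (auto simp: A_def)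
  have mc: "minkc n (1/2) A B \<in> sets \<mu>"
    by (intro compact_sets minkc_compact A B minkc_Rn)
  have "measure \<mu> A powr (1/2) * measure \<mu> B powr (1 - 1/2) \<le> measure \<mu> (minkc n (1/2) A B)"
    using mc A B compact_sets by (intro lc_ineq) auto
  also have "\<dots> \<le> measure \<mu> {x \<in> space \<mu>. (T - s)/2 \<le> normK n K x \<and> normK n K x \<le> (T' + s)/2}"
  proof (intro P.finite_measure_mono subsetI)
    fix z assume "z \<in> minkc n (1/2) A B"
    then obtain a b where ab: "a \<in> A" "b \<in> B" "z = vplus n (vscale n (1/2) a) (vscale n (1 - 1/2) b)"
      by (auto simp: minkc_def)
    have aR: "a \<in> Rn n" and bR: "b \<in> Rn n" using ab A B by auto
    have na: "normK n K a \<le> s" using ab(1) normK_le_iff[OF aR s] by (auto simp: A_def)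
    have nb: "T \<le> normK n K b" "normK n K b \<le> T'" using ab(2) by (auto simp: B_def)
    have "normK n K z \<le> normK n K (vscale n (1/2) a) + normK n K (vscale n (1/2) b)"
      unfolding ab(3) by (intro normK_triangle[THEN order_trans]) auto
    also have "\<dots> = normK n K a / 2 + normK n K b / 2" using normK_scale aR bR by simp
    finally have 1: "normK n K z \<le> (T' + s) / 2" using na nb by simp
    have "vscale n (1/2) b = vplus n z (vscale n (-1) (vscale n (1/2) a))"
      using bR by (intro Rn_eqI[where n=n]) (auto simp: ab(3) vplus_app vscale_app)
    then have "normK n K (vscale n (1/2) b) \<le> normK n K z + normK n K (vscale n (-1) (vscale n (1/2) a))"
      using normK_triangle[of z "vscale n (-1) (vscale n (1/2) a)"] ab(3) by simp
    then have "normK n K b / 2 \<le> normK n K z + normK n K a / 2"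
      using normK_scale aR bR by simp
    then have 2: "(T - s) / 2 \<le> normK n K z" using na nb by simp
    have "z \<in> space \<mu>" using ab(3) by (simp add: space_mu)
    then show "z \<in> {x \<in> space \<mu>. (T - s)/2 \<le> normK n K x \<and> normK n K x \<le> (T' + s)/2}"
      using 1 2 by simp
  qed auto
  finally show ?thesis
    using FK_eq[OF s] by (simp add: A_def B_def powr_half_sqrt real_sqrt_mult mult.commute)
qed

end

lemma tangent_logconc:
  fixes g :: "real \<Rightarrow> real"
  assumes der: "(g has_real_derivative D) (at x0)" and gx0: "g x0 > 0" and gy: "g y \<ge> 0"
    and conc: "\<And>l. 0 < l \<Longrightarrow> l < 1 \<Longrightarrow> g y powr l * g x0 powr (1 - l) \<le> g (l * y + (1 - l) * x0)"
  shows "g y \<le> g x0 * exp (D * (y - x0) / g x0)"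
proof (cases "g y = 0 \<or> y = x0")
  case True
  then show ?thesis using gx0 by auto
next
  case False
  then have gyp: "g y > 0" and h0: "y - x0 \<noteq> 0" using gy by auto
  define h where "h = y - x0"
  define \<phi> where "\<phi> x = ln (g x)" for x
  have dphi: "(\<phi> has_real_derivative (1 / g x0 * D)) (at x0)"
    unfolding \<phi>_def by (rule DERIV_chain2[OF DERIV_ln_divide[OF gx0] der])
  then have dq: "((\<lambda>t. (\<phi> (x0 + t) - \<phi> x0) / t) \<longlongrightarrow> D / g x0) (at 0)"
    unfolding DERIV_def by simp
  have fl: "filterlim (\<lambda>l. l * h) (at 0) (at_right 0)"
  proof (rule filterlim_atI)
    show "((\<lambda>l. l * h) \<longlongrightarrow> 0) (at_right 0)"
      by (rule tendsto_eq_intros) (auto intro: tendsto_ident_at)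
    have "\<forall>\<^sub>F l in at_right (0::real). l > 0" by (simp add: eventually_at_right_less)
    then show "\<forall>\<^sub>F l in at_right 0. l * h \<noteq> 0"
      by eventually_elim (use h0 in \<open>auto simp: h_def\<close>)
  qed
  have lim: "((\<lambda>l. (\<phi> (x0 + l * h) - \<phi> x0) / (l * h) * h) \<longlongrightarrow> D / g x0 * h) (at_right 0)"
    by (intro tendsto_mult tendsto_const filterlim_compose[OF dq fl])
  have ev: "\<forall>\<^sub>F l in at_right 0. \<phi> y - \<phi> x0 \<le> (\<phi> (x0 + l * h) - \<phi> x0) / (l * h) * h"
  proof -
    have "\<forall>\<^sub>F l in at_right (0::real). l < 1"
      unfolding eventually_at_right_field by (intro exI[of _ 1]) auto
    moreover have "\<forall>\<^sub>F l in at_right (0::real). l > 0" by (simp add: eventually_at_right_less)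
    ultimately show ?thesis
    proof (rule eventually_elim2)
      fix l :: real assume l: "l < 1" "l > 0"
      have "g y powr l * g x0 powr (1 - l) \<le> g (l * y + (1 - l) * x0)" using conc l by auto
      moreover have "g y powr l * g x0 powr (1 - l) > 0" using gyp gx0 by simp
      ultimately have "ln (g y powr l * g x0 powr (1 - l)) \<le> ln (g (l * y + (1 - l) * x0))"
        by simp
      then have "l * \<phi> y + (1 - l) * \<phi> x0 \<le> \<phi> (x0 + l * h)"
        using gyp gx0 by (simp add: \<phi>_def ln_mult ln_powr h_def algebra_simps)
      then have "\<phi> y - \<phi> x0 \<le> (\<phi> (x0 + l * h) - \<phi> x0) / l"
        using l by (simp add: field_simps)
      also have "\<dots> = (\<phi> (x0 + l * h) - \<phi> x0) / (l * h) * h" using h0 by (simp add: h_def)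
      finally show "\<phi> y - \<phi> x0 \<le> (\<phi> (x0 + l * h) - \<phi> x0) / (l * h) * h" .
    qed
  qed
  have "\<phi> y - \<phi> x0 \<le> D / g x0 * h"
    by (rule tendsto_lowerbound[OF lim ev]) simp
  then have "ln (g y) \<le> ln (g x0) + D * (y - x0) / g x0" by (simp add: \<phi>_def h_def)
  then have "g y \<le> exp (ln (g x0) + D * (y - x0) / g x0)"
    using gyp by (metis exp_le_cancel_iff exp_ln)
  then show ?thesis using gx0 by (simp add: exp_add)
qed

context lcm begin

interpretation P: prob_space \<mu> by (rule prob)

lemma isCont_FK: "isCont (FK n \<mu> K) m" by (rule DERIV_isCont[OF der])

lemma FK_lim_left: "(\<lambda>k. FK n \<mu> K (m - inverse (real (Suc k)))) \<longlonglongrightarrow> FK n \<mu> K m"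
proof -
  have "(\<lambda>k. m - inverse (real (Suc k))) \<longlonglongrightarrow> m - 0"
    by (intro tendsto_intros LIMSEQ_inverse_real_of_nat)
  then show ?thesis using isCont_tendsto_compose[OF isCont_FK] by simp
qed

lemma FKm: "FK n \<mu> K m = 1/2" and m_pos: "m > 0"
proof -
  define A where "A k = {x \<in> space \<mu>. normK n K x \<le> m - inverse (real (Suc k))}" for k
  have inc: "incseq A" unfolding A_def incseq_def
  proof (intro allI impI subsetI)
    fix a b :: nat and x assume ab: "a \<le> b" and x: "x \<in> {x \<in> space \<mu>. normK n K x \<le> m - inverse (real (Suc a))}"
    have "inverse (real (Suc b)) \<le> inverse (real (Suc a))" using ab by (intro le_imp_inverse_le) auto
    moreover have "x \<in> space \<mu>" "normK n K x \<le> m - inverse (real (Suc a))" using x by blast+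
    ultimately show "x \<in> {x \<in> space \<mu>. normK n K x \<le> m - inverse (real (Suc b))}"
      by (simp only: mem_Collect_eq simp_thms)
  qed
  have U: "(\<Union>k. A k) = {x \<in> space \<mu>. normK n K x < m}"
  proof safe
    fix x assume x: "x \<in> space \<mu>" "normK n K x < m"
    obtain k where "inverse (real (Suc k)) < m - normK n K x"
      using reals_Archimedean[of "m - normK n K x"] x by auto
    then have "normK n K x \<le> m - inverse (real (Suc k))" by linarith
    then have "x \<in> A k" using x(1) unfolding A_def by blast
    then show "x \<in> (\<Union>k. A k)" by blast
  next
    fix x k assume "x \<in> A k"
    then have "x \<in> space \<mu>" "normK n K x \<le> m - inverse (real (Suc k))" unfolding A_def by blast+
    moreover have "inverse (real (Suc k)) > 0" by simp
    ultimately show "x \<in> space \<mu>" "normK n K x < m" by linarith+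
  qed
  have L0: "(\<lambda>k. measure \<mu> (A k)) \<longlonglongrightarrow> measure \<mu> (\<Union>k. A k)"
    by (rule P.finite_Lim_measure_incseq[OF _ inc]) (auto simp: A_def)
  have eq: "(\<lambda>k. measure \<mu> (A k)) = (\<lambda>k. FK n \<mu> K (m - inverse (real (Suc k))))"
    by (simp add: A_def FK_def)
  have L1: "(\<lambda>k. FK n \<mu> K (m - inverse (real (Suc k)))) \<longlonglongrightarrow> measure \<mu> {x \<in> space \<mu>. normK n K x < m}"
    using L0 unfolding eq U .
  have "measure \<mu> {x \<in> space \<mu>. normK n K x < m} = FK n \<mu> K m"
    by (rule LIMSEQ_unique[OF L1 FK_lim_left])
  moreover have "{x \<in> space \<mu>. normK n K x \<ge> m} = space \<mu> - {x \<in> space \<mu>. normK n K x < m}" by auto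
  ultimately have "measure \<mu> {x \<in> space \<mu>. normK n K x \<ge> m} = 1 - FK n \<mu> K m"
    by (simp add: P.prob_compl)
  then have 1: "FK n \<mu> K m = 1/2" using med by (simp add: is_median_def FK_def)
  then show "FK n \<mu> K m = 1/2" .
  show "m > 0"
  proof (rule ccontr)
    assume "\<not> m > 0"
    then have "FK n \<mu> K (m - inverse (real (Suc k))) = 0" for k
    proof -
      have "inverse (real (Suc k)) > 0" by simp
      then show ?thesis using \<open>\<not> m > 0\<close> by (intro FK_neg) linarith
    qed
    then have "(\<lambda>k. FK n \<mu> K (m - inverse (real (Suc k)))) = (\<lambda>k. 0)" by (rule ext)
    then have "(\<lambda>k. 0) \<longlonglongrightarrow> FK n \<mu> K m" using FK_lim_left by simp
    then have "FK n \<mu> K m = 0" by (simp add: LIMSEQ_const_iff)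
    then show False using 1 by simp
  qed
qed

lemma f_nonneg: "f \<ge> 0"
proof (rule ccontr)
  assume "\<not> f \<ge> 0"
  then obtain d where "d > 0" "\<forall>h>0. h < d \<longrightarrow> FK n \<mu> K m > FK n \<mu> K (m + h)"
    using DERIV_neg_dec_right[OF der] by force
  then have "FK n \<mu> K m > FK n \<mu> K (m + d/2)" by auto
  moreover have "FK n \<mu> K m \<le> FK n \<mu> K (m + d/2)" using \<open>d > 0\<close> by (intro FK_mono) auto
  ultimately show False by simp
qed

lemma FK_tangent: assumes y: "y > 0"
  shows "FK n \<mu> K y \<le> 1/2 * exp (2 * f * (y - m))"
proof -
  have "FK n \<mu> K y \<le> FK n \<mu> K m * exp (f * (y - m) / FK n \<mu> K m)"
    by (rule tangent_logconc[OF der]) (use FKm y m_pos in \<open>auto intro: FK_nonneg FK_logconc\<close>)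
  then show ?thesis using FKm by (simp add: mult_ac)
qed

lemma exists_big: "\<exists>t. FK n \<mu> K t > 1/2"
proof -
  define A where "A k = {x \<in> space \<mu>. normK n K x \<le> real k}" for k :: nat
  have inc: "incseq A" unfolding A_def incseq_def
  proof (intro allI impI subsetI)
    fix a b :: nat and x assume ab: "a \<le> b" and x: "x \<in> {x \<in> space \<mu>. normK n K x \<le> real a}"
    then have "x \<in> space \<mu>" "normK n K x \<le> real a" by blast+
    moreover have "real a \<le> real b" using ab by simp
    ultimately show "x \<in> {x \<in> space \<mu>. normK n K x \<le> real b}" by simp
  qed
  have U: "(\<Union>k. A k) = space \<mu>"
  proof safe
    fix x assume x: "x \<in> space \<mu>"
    obtain k where "normK n K x < real k" using reals_Archimedean2 by blast
    then have "x \<in> A k" using x unfolding A_def by auto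
    then show "x \<in> (\<Union>k. A k)" by blast
  qed (auto simp: A_def)
  have "(\<lambda>k. measure \<mu> (A k)) \<longlonglongrightarrow> measure \<mu> (\<Union>k. A k)"
    by (rule P.finite_Lim_measure_incseq[OF _ inc]) (auto simp: A_def)
  then have "(\<lambda>k. FK n \<mu> K (real k)) \<longlonglongrightarrow> 1" using U by (simp add: A_def FK_def P.prob_space)
  then have "\<forall>\<^sub>F k in sequentially. FK n \<mu> K (real k) > 1/2"
    by (rule order_tendstoD) simp
  then obtain k where "FK n \<mu> K (real k) > 1/2" by (metis eventually_sequentially order_refl)
  then show ?thesis by blast
qed

lemma f_pos: "f > 0"
proof (rule ccontr)
  assume "\<not> f > 0"
  then have f0: "f = 0" using f_nonneg by simp
  obtain t where t: "FK n \<mu> K t > 1/2" using exists_big by blast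
  have "t > 0" using t FK_neg[of t] FKm FK_mono[of t m] m_pos by (cases "t > 0") auto
  then have "FK n \<mu> K t \<le> 1/2" using FK_tangent[of t] f0 by simp
  then show False using t by simp
qed

end

lemma chord_log:
  fixes g1 g2 g3 s1 s2 s3 D la :: real
  assumes pos: "g1 > 0" "g2 > 0" "g3 > 0" and s: "s1 < s2" "s2 < s3"
    and la: "la = (s3 - s2) / (s3 - s1)"
    and conc: "g1 powr la * g3 powr (1 - la) \<le> g2"
    and tan: "g2 \<le> g3 * exp (D * (s2 - s3))"
  shows "g1 \<le> g2 * exp (D * (s1 - s2))"
proof -
  have la01: "0 < la" "la < 1" using s by (auto simp: la field_simps)
  have p1: "g1 powr la * g3 powr (1 - la) > 0" using pos by simp
  have "ln (g1 powr la * g3 powr (1 - la)) \<le> ln g2"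
    using conc p1 pos(2) by (subst ln_le_cancel_iff) auto
  also have "ln (g1 powr la * g3 powr (1 - la)) = la * ln g1 + (1 - la) * ln g3"
    using pos by (simp add: ln_mult ln_powr)
  finally have 1: "la * ln g1 + (1 - la) * ln g3 \<le> ln g2" .
  have p2: "g3 * exp (D * (s2 - s3)) > 0" using pos by simp
  have "ln g2 \<le> ln (g3 * exp (D * (s2 - s3)))"
    using tan p2 pos(2) by (subst ln_le_cancel_iff) auto
  also have "ln (g3 * exp (D * (s2 - s3))) = ln g3 + D * (s2 - s3)"
    using pos by (simp add: ln_mult)
  finally have 2: "ln g2 \<le> ln g3 + D * (s2 - s3)" .
  have "la * ln g1 \<le> la * ln g2 + (1 - la) * D * (s2 - s3)"
  proof -
    have "(1 - la) * ln g3 \<ge> (1 - la) * (ln g2 - D * (s2 - s3))"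
      using 2 la01 by (intro mult_left_mono) auto
    then show ?thesis using 1 by (simp add: algebra_simps)
  qed
  moreover have "(1 - la) * D * (s2 - s3) = la * (D * (s1 - s2))"
    using s by (simp add: la field_simps)
  ultimately have "la * ln g1 \<le> la * (ln g2 + D * (s1 - s2))" by (simp add: algebra_simps)
  then have "ln g1 \<le> ln g2 + D * (s1 - s2)" using la01 by simp
  then have "exp (ln g1) \<le> exp (ln g2 + D * (s1 - s2))" by simp
  then show ?thesis using pos by (simp add: exp_add)
qed

context lcm begin

interpretation P: prob_space \<mu> by (rule prob)

lemma partA1: assumes e: "0 < \<epsilon>" "\<epsilon> < 1"
  shows "FK n \<mu> K ((1 - \<epsilon>) * m) \<le> 1/2 * exp (- 2 * \<epsilon> * (m * f))"
proof -
  have "FK n \<mu> K ((1 - \<epsilon>) * m) \<le> 1/2 * exp (2 * f * ((1 - \<epsilon>) * m - m))"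
    using e m_pos by (intro FK_tangent) auto
  also have "2 * f * ((1 - \<epsilon>) * m - m) = - 2 * \<epsilon> * (m * f)" by (simp add: algebra_simps)
  finally show ?thesis .
qed

lemma measure_K: "measure \<mu> K = FK n \<mu> K 1"
proof -
  have "vscale n 1 ` K = (\<lambda>x. x) ` K" by (rule image_cong) (use K_sub vscale_one in auto)
  then show ?thesis using FK_eq[of 1] by simp
qed

lemma tail_big: "measure \<mu> {x \<in> space \<mu>. m + 1/(8*f) < normK n K x} \<ge> 1/4"
proof -
  have d: "1/(8*f) > 0" using f_pos by simp
  have "FK n \<mu> K (m + 1/(8*f)) \<le> 1/2 * exp (2 * f * (m + 1/(8*f) - m))"
    by (intro FK_tangent add_pos_pos m_pos d)
  also have "2 * f * (m + 1/(8*f) - m) = 1/4" using f_pos by simp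
  also have "exp (1/4 :: real) \<le> 1 + 2 * (1/4)" by (rule real_exp_bound_lemma) auto
  finally have F: "FK n \<mu> K (m + 1/(8*f)) \<le> 3/4" by simp
  have "{x \<in> space \<mu>. m + 1/(8*f) < normK n K x} = space \<mu> - {x \<in> space \<mu>. normK n K x \<le> m + 1/(8*f)}"
    by auto
  then have "measure \<mu> {x \<in> space \<mu>. m + 1/(8*f) < normK n K x} = 1 - FK n \<mu> K (m + 1/(8*f))"
    by (simp add: P.prob_compl FK_def)
  then show ?thesis using F by simp
qed

lemma ind_int: "A \<in> sets \<mu> \<Longrightarrow> integrable \<mu> (\<lambda>x. c * indicator A x :: real)"
  "A \<in> sets \<mu> \<Longrightarrow> (\<integral>x. c * indicator A x \<partial>\<mu>) = c * measure \<mu> A"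
  using P.emeasure_finite[of A]
  by (auto intro!: integrable_mult_right simp: integrable_indicator_iff less_top[symmetric] sets.Int_space_eq2)

lemma abs_dev_bound:
  assumes int: "integrable \<mu> (\<lambda>x. \<bar>normK n K x - m\<bar>)"
  shows "(\<integral>x. \<bar>normK n K x - m\<bar> \<partial>\<mu>) \<ge> 1 / (32 * f)"
proof -
  define S where "S = {x \<in> space \<mu>. m + 1/(8*f) < normK n K x}"
  have S: "S \<in> sets \<mu>" unfolding S_def by measurable
  have "1 / (32 * f) = (1/(8*f)) * (1/4)" by simp
  also have "\<dots> \<le> (1/(8*f)) * measure \<mu> S"
    using tail_big f_pos unfolding S_def by (intro mult_left_mono) auto
  also have "\<dots> = (\<integral>x. (1/(8*f)) * indicator S x \<partial>\<mu>)" by (rule ind_int(2)[OF S, symmetric])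
  also have "(\<integral>x. (1/(8*f)) * indicator S x \<partial>\<mu>) \<le> (\<integral>x. \<bar>normK n K x - m\<bar> \<partial>\<mu>)"
  proof (rule integral_mono[OF ind_int(1)[OF S] int])
    fix x assume "x \<in> space \<mu>"
    then show "1 / (8 * f) * indicator S x \<le> \<bar>normK n K x - m\<bar>"
      using f_pos by (auto simp: S_def indicator_def)
  qed
  finally show ?thesis .
qed

lemma partB2: assumes e: "0 < \<epsilon>" "\<epsilon> < 1"
  shows "\<epsilon> powr (2 * f) * measure \<mu> K \<le> \<epsilon> powr (1 / (16 * (\<integral>x. \<bar>normK n K x - m\<bar> \<partial>\<mu>))) * measure \<mu> K"
proof -
  define A where "A = (\<integral>x. \<bar>normK n K x - m\<bar> \<partial>\<mu>)"
  have "1 / (16 * A) \<le> 2 * f"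
  proof (cases "integrable \<mu> (\<lambda>x. \<bar>normK n K x - m\<bar>)")
    case True
    then have A1: "A \<ge> 1 / (32 * f)" unfolding A_def by (rule abs_dev_bound)
    have "1 = (32 * f) * (1 / (32 * f))" using f_pos by simp
    also have "\<dots> \<le> (32 * f) * A" using A1 f_pos by (intro mult_left_mono) auto
    finally have A2: "1 \<le> 2 * f * (16 * A)" by simp
    have "A > 0" using A1 f_pos by (smt (verit) divide_pos_pos)
    then show ?thesis using A2 by (simp add: pos_divide_le_eq)
  next
    case False
    then have "A = 0" unfolding A_def by (simp add: not_integrable_integral_eq)
    then show ?thesis using f_nonneg by simp
  qed
  then have "\<epsilon> powr (2 * f) \<le> \<epsilon> powr (1 / (16 * A))" using e by (intro powr_mono') auto
  then show ?thesis unfolding A_def by (intro mult_right_mono) auto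
qed

lemma var_bound:
  assumes int: "integrable \<mu> (\<lambda>x. (normK n K x - c)\<^sup>2)"
  shows "(\<integral>x. (normK n K x - c)\<^sup>2 \<partial>\<mu>) \<ge> (1 / (32 * f))\<^sup>2"
proof -
  define d where "d = 1 / (8 * f)"
  have d: "d > 0" using f_pos by (simp add: d_def)
  obtain S where S: "S \<in> sets \<mu>" "measure \<mu> S \<ge> 1/4" "\<And>x. x \<in> S \<Longrightarrow> (d/2)\<^sup>2 \<le> (normK n K x - c)\<^sup>2"
  proof (cases "c \<le> m + d/2")
    case True
    define S where "S = {x \<in> space \<mu>. m + 1/(8*f) < normK n K x}"
    have "S \<in> sets \<mu>" unfolding S_def by measurable
    moreover have "measure \<mu> S \<ge> 1/4" using tail_big by (simp add: S_def)
    moreover have "(d/2)\<^sup>2 \<le> (normK n K x - c)\<^sup>2" if "x \<in> S" for x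
    proof -
      have "d/2 \<le> normK n K x - c" using that True d by (auto simp: S_def d_def)
      then show ?thesis using d by (intro power_mono) auto
    qed
    ultimately show ?thesis using that by blast
  next
    case False
    define S where "S = {x \<in> space \<mu>. normK n K x \<le> m}"
    have "S \<in> sets \<mu>" unfolding S_def by measurable
    moreover have "measure \<mu> S \<ge> 1/4" using FKm by (simp add: S_def FK_def)
    moreover have "(d/2)\<^sup>2 \<le> (normK n K x - c)\<^sup>2" if "x \<in> S" for x
    proof -
      have "d/2 \<le> c - normK n K x" using that False d by (auto simp: S_def)
      then have "(d/2)\<^sup>2 \<le> (c - normK n K x)\<^sup>2" using d by (intro power_mono) auto
      then show ?thesis by (simp add: power2_commute)
    qed
    ultimately show ?thesis using that by blast
  qed
  have "(1 / (32 * f))\<^sup>2 = (d/2)\<^sup>2 * (1/4)" using f_pos by (simp add: d_def power2_eq_square)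
  also have "\<dots> \<le> (d/2)\<^sup>2 * measure \<mu> S"
    using S(2) by (intro mult_left_mono) auto
  also have "\<dots> = (\<integral>x. (d/2)\<^sup>2 * indicator S x \<partial>\<mu>)" by (rule ind_int(2)[OF S(1), symmetric])
  also have "(\<integral>x. (d/2)\<^sup>2 * indicator S x \<partial>\<mu>) \<le> (\<integral>x. (normK n K x - c)\<^sup>2 \<partial>\<mu>)"
  proof (rule integral_mono[OF ind_int(1)[OF S(1)] int])
    fix x assume "x \<in> space \<mu>"
    then show "(d/2)\<^sup>2 * indicator S x \<le> (normK n K x - c)\<^sup>2"
      using S(3)[of x] by (auto simp: indicator_def)
  qed
  finally show ?thesis .
qed

end

context lcm begin

interpretation P: prob_space \<mu> by (rule prob)

lemma gfun_eq: "(\<lambda>t. measure \<mu> (vscale n (exp t) ` K)) = (\<lambda>t. FK n \<mu> K (exp t))"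
  by (rule ext) (simp add: FK_eq)

lemma der_g: "((\<lambda>t. FK n \<mu> K (exp t)) has_real_derivative f * m) (at (ln m))"
proof -
  have "(FK n \<mu> K has_real_derivative f) (at (exp (ln m)))" using der m_pos by simp
  from DERIV_chain2[OF this DERIV_exp] show ?thesis using m_pos by simp
qed

lemma gtan: assumes B: "B_property n \<mu> K"
  shows "FK n \<mu> K (exp y) \<le> 1/2 * exp (2 * (f * m) * (y - ln m))"
proof -
  have lcf: "log_concave_fun (\<lambda>t. FK n \<mu> K (exp t))" using B gfun_eq by (simp add: B_property_def)
  have "FK n \<mu> K (exp y) \<le> FK n \<mu> K (exp (ln m)) * exp (f * m * (y - ln m) / FK n \<mu> K (exp (ln m)))"
  proof (rule tangent_logconc[where g="\<lambda>t. FK n \<mu> K (exp t)", OF der_g])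
    show "0 < FK n \<mu> K (exp (ln m))" using FKm m_pos by simp
    show "0 \<le> FK n \<mu> K (exp y)" by (rule FK_nonneg)
    fix l :: real assume "0 < l" "l < 1"
    then show "FK n \<mu> K (exp y) powr l * FK n \<mu> K (exp (ln m)) powr (1 - l) \<le> FK n \<mu> K (exp (l * y + (1 - l) * ln m))"
      using lcf unfolding log_concave_fun_def by blast
  qed
  then show ?thesis using FKm m_pos by (simp add: mult_ac)
qed

lemma partB3: assumes B: "B_property n \<mu> K" and e: "0 < \<epsilon>" "\<epsilon> < 1"
  shows "FK n \<mu> K (\<epsilon> * m) \<le> 1/2 * \<epsilon> powr (2 * (m * f))"
proof -
  have "FK n \<mu> K (exp (ln (\<epsilon> * m))) \<le> 1/2 * exp (2 * (f * m) * (ln (\<epsilon> * m) - ln m))"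
    by (rule gtan[OF B])
  moreover have "exp (ln (\<epsilon> * m)) = \<epsilon> * m" using e m_pos by simp
  moreover have "ln (\<epsilon> * m) - ln m = ln \<epsilon>" using e m_pos by (simp add: ln_mult)
  moreover have "exp (2 * (f * m) * ln \<epsilon>) = \<epsilon> powr (2 * (m * f))" using e by (simp add: powr_def mult_ac)
  ultimately show ?thesis by simp
qed

lemma f_zero_if_m_small: assumes muK: "measure \<mu> K \<le> 1/2" and m1: "m < 1" shows "f = 0"
proof (rule ccontr)
  assume "f \<noteq> 0"
  then have "f > 0" using f_nonneg by simp
  then obtain d where d: "d > 0" "\<forall>h>0. h < d \<longrightarrow> FK n \<mu> K m < FK n \<mu> K (m + h)"
    using DERIV_pos_inc_right[OF der] by blast
  define h where "h = min (d/2) ((1 - m)/2)"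
  have "h \<le> (1 - m)/2" unfolding h_def by (rule min.cobounded2)
  then have h: "h > 0" "h < d" "m + h \<le> 1" using d m1 by (auto simp: h_def)
  then have "FK n \<mu> K m < FK n \<mu> K (m + h)" using d by auto
  also have "\<dots> \<le> FK n \<mu> K 1" using h by (intro FK_mono) auto
  also have "\<dots> \<le> 1/2" using muK measure_K by simp
  finally show False using FKm by simp
qed

lemma partB1: assumes B: "B_property n \<mu> K" and muK: "measure \<mu> K \<le> 1/2" and e: "0 < \<epsilon>" "\<epsilon> < 1"
  shows "measure \<mu> (vscale n \<epsilon> ` K) \<le> \<epsilon> powr (2 * f) * measure \<mu> K"
proof -
  have lhs: "measure \<mu> (vscale n \<epsilon> ` K) = FK n \<mu> K \<epsilon>" using FK_eq e by simp
  have rhs: "measure \<mu> K = FK n \<mu> K 1" by (rule measure_K)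
  have epow: "\<epsilon> powr (2 * f) = exp (2 * f * ln \<epsilon>)" using e by (simp add: powr_def mult_ac)
  have lne: "ln \<epsilon> < 0" using e by simp
  consider "m < 1" | "m = 1" | "m > 1" by linarith
  then show ?thesis
  proof cases
    case 1
    then have "f = 0" using f_zero_if_m_small muK by simp
    then show ?thesis unfolding lhs rhs using e by (simp add: FK_mono)
  next
    case 2
    have "FK n \<mu> K (exp (ln \<epsilon>)) \<le> 1/2 * exp (2 * (f * m) * (ln \<epsilon> - ln m))" by (rule gtan[OF B])
    then have A: "FK n \<mu> K \<epsilon> \<le> 1/2 * exp (2 * f * ln \<epsilon>)" using 2 e by simp
    have FK1: "FK n \<mu> K 1 = 1/2" using FKm 2 by simp
    have "FK n \<mu> K \<epsilon> \<le> FK n \<mu> K 1 * exp (2 * f * ln \<epsilon>)" unfolding FK1 using A by linarith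
    then show ?thesis unfolding lhs rhs epow by (simp add: mult_ac)
  next
    case 3
    show ?thesis
    proof (cases "FK n \<mu> K \<epsilon> = 0")
      case True then show ?thesis unfolding lhs rhs by (simp add: FK_nonneg)
    next
      case False
      then have g1: "FK n \<mu> K \<epsilon> > 0" using FK_nonneg[of \<epsilon>] by simp
      have g2: "FK n \<mu> K 1 > 0" using g1 FK_mono[of \<epsilon> 1] e by simp
      define la where "la = (ln m - 0) / (ln m - ln \<epsilon>)"
      have lnm: "ln m > 0" using 3 by simp
      have la01: "0 < la" "la < 1" using lnm lne by (auto simp: la_def field_simps)
      have comb: "la * ln \<epsilon> + (1 - la) * ln m = 0"
        using lnm lne by (simp add: la_def field_simps)
      have lcf: "log_concave_fun (\<lambda>t. FK n \<mu> K (exp t))" using B gfun_eq by (simp add: B_property_def)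
      have conc: "FK n \<mu> K \<epsilon> powr la * FK n \<mu> K m powr (1 - la) \<le> FK n \<mu> K 1"
      proof -
        have "FK n \<mu> K (exp (ln \<epsilon>)) powr la * FK n \<mu> K (exp (ln m)) powr (1 - la)
            \<le> FK n \<mu> K (exp (la * ln \<epsilon> + (1 - la) * ln m))"
          using lcf la01 unfolding log_concave_fun_def by blast
        then show ?thesis using comb e m_pos by simp
      qed
      have tan0: "FK n \<mu> K 1 \<le> 1/2 * exp (2 * (f * m) * (0 - ln m))"
        using gtan[OF B, of 0] by simp
      have tan: "FK n \<mu> K 1 \<le> FK n \<mu> K m * exp (2 * (f * m) * (0 - ln m))"
        unfolding FKm by (rule tan0)
      have "FK n \<mu> K \<epsilon> \<le> FK n \<mu> K 1 * exp (2 * (f * m) * (ln \<epsilon> - 0))"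
        by (rule chord_log[OF g1 g2 _ lne lnm la_def conc tan]) (use FKm in simp)
      also have "\<dots> \<le> FK n \<mu> K 1 * exp (2 * f * ln \<epsilon>)"
      proof -
        have "2 * f * ln \<epsilon> * m \<le> 2 * f * ln \<epsilon> * 1"
          using 3 lne f_nonneg by (intro mult_left_mono_neg) (auto simp: mult_nonneg_nonpos)
        then show ?thesis using g2 by (intro mult_left_mono) (auto simp: mult_ac)
      qed
      finally show ?thesis unfolding lhs rhs epow by (simp add: mult_ac)
    qed
  qed
qed

end

lemma decay_step:
  fixes a b c d :: real
  assumes nn: "0 \<le> a" "0 \<le> b" "0 \<le> c" "0 \<le> d"
    and c: "c \<le> 2 * (a + b)\<^sup>2" and d: "d \<le> 2 * (b + c)\<^sup>2" and r: "a + b \<le> 1/64"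
  shows "c + d \<le> (a + b) / 8"
proof -
  define r where "r = a + b"
  have r0: "0 \<le> r" "r \<le> 1/64" using nn r by (auto simp: r_def)
  have c1: "c \<le> 2 * r * r" using c by (simp only: r_def power2_eq_square mult.assoc)
  have "2 * r * r \<le> 2 * r * (1/64)" using r0 by (intro mult_left_mono) auto
  then have c2: "c \<le> r / 32" using c1 by simp
  have bc: "b + c \<le> 33/32 * r" using c2 nn by (simp add: r_def)
  have "(b + c)\<^sup>2 \<le> (33/32 * r)\<^sup>2" using bc nn by (intro power_mono) auto
  then have "2 * (b + c)\<^sup>2 \<le> 2 * (33/32 * r)\<^sup>2" by simp
  moreover have "2 * (33/32 * r)\<^sup>2 = 2 * (33/32)\<^sup>2 * (r * r)" by (simp add: power2_eq_square)
  ultimately have d1: "d \<le> 2 * (33/32)\<^sup>2 * (r * r)" using d by linarith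
  have "c + d \<le> (2 + 2 * (33/32)\<^sup>2) * (r * r)" using c1 d1 by (simp add: algebra_simps)
  also have "\<dots> \<le> (2 + 2 * (33/32)\<^sup>2) * (r * (1/64))"
    using r0 by (intro mult_left_mono) (auto intro: mult_left_mono)
  also have "\<dots> \<le> r / 8" using r0 by (simp add: power2_eq_square)
  finally show ?thesis by (simp add: r_def)
qed

context lcm begin

interpretation P: prob_space \<mu> by (rule prob)

definition "ss j = m * (2 + 2 ^ j)"
definition "Bs j = {x \<in> space \<mu>. ss j \<le> normK n K x \<and> normK n K x \<le> ss (Suc j)}"
definition "pp j = measure \<mu> (Bs j)"

lemma ss_pos: "ss j > 0"
  unfolding ss_def by (intro mult_pos_pos m_pos add_pos_pos) auto

lemma ss_less: "i < j \<Longrightarrow> ss i < ss j"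
  using m_pos by (simp add: ss_def)

lemma ss_le: "i \<le> j \<Longrightarrow> ss i \<le> ss j"
  using m_pos by (simp add: ss_def)

lemma Bs_sets[measurable]: "Bs j \<in> sets \<mu>" unfolding Bs_def by measurable

lemma pp_nonneg: "0 \<le> pp j" by (simp add: pp_def)

lemma Bs_disj: "Suc i < j \<Longrightarrow> Bs i \<inter> Bs j = {}"
  using ss_less[of "Suc i" j] by (auto simp: Bs_def)

lemma pp_rec: assumes j: "1 \<le> j" shows "pp (j + 2) \<le> 2 * (pp j + pp (j + 1))\<^sup>2"
proof -
  have p2: "(2::real) ^ j \<ge> 2" using j by (metis power_one_right power_increasing one_le_numeral)
  have l: "ss j \<le> (ss (j + 2) - m) / 2" using m_pos p2 by (simp add: ss_def field_simps power_add)
  have u: "(ss (j + 3) + m) / 2 \<le> ss (j + 2)" using m_pos by (simp add: ss_def field_simps power_add)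
  have "sqrt (measure \<mu> {x \<in> space \<mu>. ss (j+2) \<le> normK n K x \<and> normK n K x \<le> ss (j+3)} * FK n \<mu> K m)
     \<le> measure \<mu> {x \<in> space \<mu>. (ss (j+2) - m)/2 \<le> normK n K x \<and> normK n K x \<le> (ss (j+3) + m)/2}"
    by (rule ann_ineq[OF m_pos ss_pos ss_le]) simp
  also have "\<dots> \<le> measure \<mu> (Bs j \<union> Bs (j + 1))"
  proof (rule P.finite_measure_mono)
    show "{x \<in> space \<mu>. (ss (j+2) - m)/2 \<le> normK n K x \<and> normK n K x \<le> (ss (j+3) + m)/2} \<subseteq> Bs j \<union> Bs (j + 1)"
      using l u by (auto simp: Bs_def)
  qed auto
  also have "\<dots> \<le> pp j + pp (j + 1)" unfolding pp_def by (rule measure_Un_le) auto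
  finally have s: "sqrt (pp (j + 2) / 2) \<le> pp j + pp (j + 1)"
    using FKm pp_nonneg[of "j+2"] by (simp add: pp_def Bs_def numeral_3_eq_3)
  have "pp (j + 2) / 2 = (sqrt (pp (j + 2) / 2))\<^sup>2" using pp_nonneg[of "j+2"] by simp
  also have "\<dots> \<le> (pp j + pp (j + 1))\<^sup>2" using s pp_nonneg[of "Suc (Suc j)"] by (intro power_mono) auto
  finally show ?thesis by simp
qed

lemma pp_decay: assumes j0: "1 \<le> j0" and r0: "pp j0 + pp (j0 + 1) \<le> 1/64"
  shows "pp (j0 + 2 * k) + pp (j0 + 2 * k + 1) \<le> (1/8) ^ k * (1/64)"
proof (induction k)
  case 0 then show ?case using r0 by simp
next
  case (Suc k)
  define j where "j = j0 + 2 * k"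
  have j: "1 \<le> j" using j0 by (simp add: j_def)
  have IH: "pp j + pp (j + 1) \<le> (1/8) ^ k * (1/64)" using Suc by (simp add: j_def)
  have "(1/8::real) ^ k \<le> 1" by (simp add: power_le_one)
  then have "(1/8::real) ^ k * (1/64) \<le> 1 * (1/64)" by (rule mult_right_mono) simp
  then have small: "pp j + pp (j + 1) \<le> 1/64" using IH by linarith
  have "pp (j + 2) + pp (j + 3) \<le> (pp j + pp (j + 1)) / 8"
  proof (rule decay_step[OF pp_nonneg pp_nonneg pp_nonneg pp_nonneg pp_rec[OF j] _ small])
    have "pp ((j + 1) + 2) \<le> 2 * (pp (j + 1) + pp ((j + 1) + 1))\<^sup>2" by (rule pp_rec) simp
    then show "pp (j + 3) \<le> 2 * (pp (j + 1) + pp (j + 2))\<^sup>2" by (simp add: numeral_3_eq_3)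
  qed
  also have "\<dots> \<le> (1/8) ^ k * (1/64) / 8" using IH by simp
  finally show ?case by (simp add: j_def numeral_3_eq_3 algebra_simps)
qed

lemma sum_pp_le1: "(\<Sum>k<N. pp (a + 2 * k)) \<le> 1"
proof -
  have "(\<Sum>k<N. pp (a + 2 * k)) = measure \<mu> (\<Union>k\<in>{..<N}. Bs (a + 2 * k))"
    unfolding pp_def
  proof (rule P.finite_measure_finite_Union[symmetric])
    show "disjoint_family_on (\<lambda>k. Bs (a + 2 * k)) {..<N}"
      unfolding disjoint_family_on_def
    proof (intro ballI impI)
      fix k k' :: nat assume "k \<noteq> k'"
      then consider "k < k'" | "k' < k" by linarith
      then show "Bs (a + 2 * k) \<inter> Bs (a + 2 * k') = {}"
      proof cases
        case 1
        then have "Suc (a + 2 * k) < a + 2 * k'" by simp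
        then show ?thesis by (rule Bs_disj)
      next
        case 2
        then have "Suc (a + 2 * k') < a + 2 * k" by simp
        then show ?thesis using Bs_disj by blast
      qed
    qed
  qed auto
  also have "\<dots> \<le> 1" by simp
  finally show ?thesis .
qed

lemma exists_j0: "\<exists>k<128. pp (1 + 2 * k) + pp (1 + 2 * k + 1) \<le> 1/64"
proof (rule ccontr)
  assume "\<not> ?thesis"
  then have h: "\<And>k. k < 128 \<Longrightarrow> 1/64 < pp (1 + 2 * k) + pp (1 + 2 * k + 1)" by force
  have "(\<Sum>k<128::nat. (1/64::real)) < (\<Sum>k<128. pp (1 + 2 * k) + pp (1 + 2 * k + 1))"
  proof (rule sum_strict_mono)
    fix k assume "k \<in> {..<128::nat}"
    then have "k < 128" by simp
    then show "1/64 < pp (1 + 2 * k) + pp (1 + 2 * k + 1)" by (rule h)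
  qed (simp_all add: lessThan_empty_iff)
  also have "\<dots> = (\<Sum>k<128. pp (1 + 2 * k)) + (\<Sum>k<128. pp (2 + 2 * k))"
    by (simp add: sum.distrib add.commute add.left_commute)
  also have "\<dots> \<le> 1 + 1" by (intro add_mono sum_pp_le1)
  finally show False by simp
qed

end

lemma ennreal_term_le_suminf: "(f :: nat \<Rightarrow> ennreal) k \<le> (\<Sum>i. f i)"
  using sum_le_suminf[OF summableI, of "{k}" f] by simp

context lcm begin

interpretation P: prob_space \<mu> by (rule prob)

lemma point_bound:
  assumes j0: "1 \<le> j0" and x: "x \<in> space \<mu>"
  shows "ennreal (normK n K x) \<le> ennreal (ss j0) +
     (\<Sum>k. ennreal (ss (j0 + 2 * k + 2)) * (indicator (Bs (j0 + 2 * k)) x + indicator (Bs (j0 + 2 * k + 1)) x))"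
    (is "_ \<le> _ + ?S")
proof (cases "normK n K x \<le> ss j0")
  case True
  then have "ennreal (normK n K x) \<le> ennreal (ss j0)" by (rule ennreal_leI)
  also have "\<dots> \<le> ennreal (ss j0) + ?S" by simp
  finally show ?thesis .
next
  case False
  define X where "X = normK n K x"
  have Xg: "ss j0 < X" using False by (simp add: X_def)
  obtain J where J: "X / m < 2 ^ J" using real_arch_pow[of 2 "X / m"] by auto
  have "X < m * 2 ^ J" using J m_pos by (simp add: field_simps)
  also have "\<dots> \<le> ss (Suc J)" using m_pos by (simp add: ss_def)
  finally have XJ: "X \<le> ss (Suc J)" by simp
  define j where "j = (LEAST i. X \<le> ss (Suc i))"
  have jX: "X \<le> ss (Suc j)" unfolding j_def by (rule LeastI[of _ J]) (rule XJ)
  have jmin: "\<And>i. X \<le> ss (Suc i) \<Longrightarrow> j \<le> i" unfolding j_def by (rule Least_le)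
  have jj0: "j0 \<le> j"
  proof (rule ccontr)
    assume "\<not> j0 \<le> j"
    then have "Suc j \<le> j0" by simp
    then have "ss (Suc j) \<le> ss j0" by (rule ss_le)
    then show False using jX Xg by simp
  qed
  have sjX: "ss j < X"
  proof -
    obtain j' where j': "j = Suc j'" using jj0 j0 by (cases j) auto
    have "\<not> X \<le> ss (Suc j')" using jmin[of j'] j' by auto
    then show ?thesis using j' by simp
  qed
  have xB: "x \<in> Bs j" using x jX sjX by (simp add: Bs_def X_def)
  define k where "k = (j - j0) div 2"
  have bound: "X \<le> ss (j0 + 2 * k + 2) \<and> (x \<in> Bs (j0 + 2 * k) \<or> x \<in> Bs (j0 + 2 * k + 1))"
  proof (cases "even (j - j0)")
    case True
    then have jk: "j = j0 + 2 * k" using jj0 by (auto simp: k_def)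
    have "ss (Suc j) \<le> ss (j0 + 2 * k + 2)" using jk by (intro ss_le) simp
    then show ?thesis using jX xB jk by simp
  next
    case False
    then have "j - j0 = 2 * k + 1" unfolding k_def by presburger
    then have jk: "j = j0 + 2 * k + 1" using jj0 by simp
    have "ss (Suc j) = ss (j0 + 2 * k + 2)" using jk by simp
    then show ?thesis using jX xB jk by simp
  qed
  have ind: "1 \<le> (indicator (Bs (j0 + 2 * k)) x + indicator (Bs (j0 + 2 * k + 1)) x :: ennreal)"
    using bound by (auto simp: indicator_def)
  have "ennreal (normK n K x) \<le> ennreal (ss (j0 + 2 * k + 2))" using bound by (intro ennreal_leI) (simp add: X_def)
  also have "\<dots> = ennreal (ss (j0 + 2 * k + 2)) * 1" by simp
  also have "\<dots> \<le> ennreal (ss (j0 + 2 * k + 2)) * (indicator (Bs (j0 + 2 * k)) x + indicator (Bs (j0 + 2 * k + 1)) x)"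
    using ind by (intro mult_left_mono) auto
  also have "\<dots> \<le> ?S" by (rule ennreal_term_le_suminf[where f="\<lambda>k. ennreal (ss (j0 + 2 * k + 2)) * (indicator (Bs (j0 + 2 * k)) x + indicator (Bs (j0 + 2 * k + 1)) x)"])
  also have "\<dots> \<le> ennreal (ss j0) + ?S" by simp
  finally show ?thesis .
qed

end

context lcm begin

interpretation P: prob_space \<mu> by (rule prob)

lemma term_bound: assumes dec: "pp (j0 + 2 * k) + pp (j0 + 2 * k + 1) \<le> (1/8) ^ k * (1/64)"
  shows "ss (j0 + 2 * k + 2) * (pp (j0 + 2 * k) + pp (j0 + 2 * k + 1)) \<le> m * 2 ^ (j0 + 3) / 64 * (1/2) ^ k"
proof -
  have p: "(2::real) ^ (j0 + 2 * k + 2) = 2 ^ (j0 + 2) * 4 ^ k"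
    by (simp add: power_add power_mult)
  have "(2::real) \<le> 2 ^ (j0 + 2) * 4 ^ k"
  proof -
    have "(2::real) ^ 1 \<le> 2 ^ (j0 + 2)" by (rule power_increasing) auto
    then have "(2::real) \<le> 2 ^ (j0 + 2)" by simp
    also have "\<dots> \<le> 2 ^ (j0 + 2) * 4 ^ k" by simp
    finally show ?thesis .
  qed
  then have sb: "ss (j0 + 2 * k + 2) \<le> m * 2 ^ (j0 + 3) * 4 ^ k"
    using m_pos unfolding ss_def p by (simp add: power_add)
  have "ss (j0 + 2 * k + 2) * (pp (j0 + 2 * k) + pp (j0 + 2 * k + 1)) \<le> ss (j0 + 2 * k + 2) * ((1/8) ^ k * (1/64))"
    using dec ss_pos[of "j0 + 2 * k + 2"] by (intro mult_left_mono) auto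
  also have "\<dots> \<le> m * 2 ^ (j0 + 3) * 4 ^ k * ((1/8) ^ k * (1/64))"
    using sb by (intro mult_right_mono) auto
  also have "\<dots> = m * 2 ^ (j0 + 3) / 64 * ((4::real) ^ k * (1/8) ^ k)"
    by (simp add: field_simps)
  also have "\<dots> = m * 2 ^ (j0 + 3) / 64 * (1/2) ^ k"
  proof -
    have "(4::real) ^ k * (1/8) ^ k = (4 * (1/8)) ^ k" by (rule power_mult_distrib[symmetric])
    then have e: "(4::real) ^ k * (1/8) ^ k = (1/2) ^ k" by simp
    show ?thesis by (simp only: e)
  qed
  finally show ?thesis .
qed

lemma nn_bound: assumes j0: "1 \<le> j0"
  and dec: "\<And>k. pp (j0 + 2 * k) + pp (j0 + 2 * k + 1) \<le> (1/8) ^ k * (1/64)"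
  shows "(\<integral>\<^sup>+x. ennreal (normK n K x) \<partial>\<mu>) \<le> ennreal (ss j0 + m * 2 ^ (j0 + 3) / 64 * 2)"
proof -
  define S where "S x = (\<Sum>k. ennreal (ss (j0 + 2 * k + 2)) * (indicator (Bs (j0 + 2 * k)) x + indicator (Bs (j0 + 2 * k + 1)) x))" for x
  have Sm: "S \<in> borel_measurable \<mu>" unfolding S_def by measurable
  have I1: "(\<integral>\<^sup>+x. ennreal (normK n K x) \<partial>\<mu>) \<le> (\<integral>\<^sup>+x. ennreal (ss j0) + S x \<partial>\<mu>)"
  proof (rule nn_integral_mono)
    fix x assume "x \<in> space \<mu>"
    then show "ennreal (normK n K x) \<le> ennreal (ss j0) + S x" unfolding S_def by (rule point_bound[OF j0])
  qed
  have I2a: "(\<integral>\<^sup>+x. ennreal (ss j0) + S x \<partial>\<mu>) = (\<integral>\<^sup>+x. ennreal (ss j0) \<partial>\<mu>) + (\<integral>\<^sup>+x. S x \<partial>\<mu>)"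
    by (rule nn_integral_add[OF _ Sm]) simp
  have I2b: "(\<integral>\<^sup>+x. ennreal (ss j0) \<partial>\<mu>) = ennreal (ss j0)"
    by (simp add: P.emeasure_space_1)
  have "(\<integral>\<^sup>+x. S x \<partial>\<mu>) = (\<Sum>k. \<integral>\<^sup>+x. ennreal (ss (j0 + 2 * k + 2)) * (indicator (Bs (j0 + 2 * k)) x + indicator (Bs (j0 + 2 * k + 1)) x) \<partial>\<mu>)"
    unfolding S_def by (rule nn_integral_suminf) measurable
  also have "\<dots> = (\<Sum>k. ennreal (ss (j0 + 2 * k + 2)) * (ennreal (pp (j0 + 2 * k)) + ennreal (pp (j0 + 2 * k + 1))))"
  proof -
    have "(\<integral>\<^sup>+x. ennreal (ss (j0 + 2 * k + 2)) * (indicator (Bs (j0 + 2 * k)) x + indicator (Bs (j0 + 2 * k + 1)) x) \<partial>\<mu>)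
      = ennreal (ss (j0 + 2 * k + 2)) * (ennreal (pp (j0 + 2 * k)) + ennreal (pp (j0 + 2 * k + 1)))" for k
    proof -
      have "(\<integral>\<^sup>+x. ennreal (ss (j0 + 2 * k + 2)) * (indicator (Bs (j0 + 2 * k)) x + indicator (Bs (j0 + 2 * k + 1)) x) \<partial>\<mu>)
        = ennreal (ss (j0 + 2 * k + 2)) * (\<integral>\<^sup>+x. (indicator (Bs (j0 + 2 * k)) x + indicator (Bs (j0 + 2 * k + 1)) x) \<partial>\<mu>)"
        by (rule nn_integral_cmult) measurable
      also have "(\<integral>\<^sup>+x. (indicator (Bs (j0 + 2 * k)) x + indicator (Bs (j0 + 2 * k + 1)) x) \<partial>\<mu>)
        = (\<integral>\<^sup>+x. indicator (Bs (j0 + 2 * k)) x \<partial>\<mu>) + (\<integral>\<^sup>+x. indicator (Bs (j0 + 2 * k + 1)) x \<partial>\<mu>)"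
        by (rule nn_integral_add) measurable
      also have "\<dots> = ennreal (pp (j0 + 2 * k)) + ennreal (pp (j0 + 2 * k + 1))"
        by (simp only: nn_integral_indicator[OF Bs_sets] pp_def P.emeasure_eq_measure)
      finally show ?thesis .
    qed
    then show ?thesis by simp
  qed
  also have "\<dots> \<le> (\<Sum>k. ennreal (m * 2 ^ (j0 + 3) / 64 * (1/2) ^ k))"
  proof (rule suminf_le[OF _ summableI summableI])
    fix k
    have "ennreal (ss (j0 + 2 * k + 2)) * (ennreal (pp (j0 + 2 * k)) + ennreal (pp (j0 + 2 * k + 1)))
        = ennreal (ss (j0 + 2 * k + 2) * (pp (j0 + 2 * k) + pp (j0 + 2 * k + 1)))"
      using ss_pos[of "j0 + 2 * k + 2"] pp_nonneg by (simp add: ennreal_plus ennreal_mult)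
    also have "\<dots> \<le> ennreal (m * 2 ^ (j0 + 3) / 64 * (1/2) ^ k)"
      by (intro ennreal_leI term_bound dec)
    finally show "ennreal (ss (j0 + 2 * k + 2)) * (ennreal (pp (j0 + 2 * k)) + ennreal (pp (j0 + 2 * k + 1)))
        \<le> ennreal (m * 2 ^ (j0 + 3) / 64 * (1/2) ^ k)" .
  qed
  also have "(\<Sum>k. ennreal (m * 2 ^ (j0 + 3) / 64 * (1/2) ^ k)) = ennreal (m * 2 ^ (j0 + 3) / 64 * 2)"
  proof (rule suminf_ennreal_eq)
    show "0 \<le> m * 2 ^ (j0 + 3) / 64 * (1/2) ^ k" for k using m_pos by simp
    have "(\<lambda>k. (1/2::real) ^ k) sums (1 / (1 - 1/2))" by (rule geometric_sums) simp
    then have "(\<lambda>k. m * 2 ^ (j0 + 3) / 64 * (1/2::real) ^ k) sums (m * 2 ^ (j0 + 3) / 64 * (1 / (1 - 1/2)))"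
      by (rule sums_mult)
    then show "(\<lambda>k. m * 2 ^ (j0 + 3) / 64 * (1/2::real) ^ k) sums (m * 2 ^ (j0 + 3) / 64 * 2)" by simp
  qed
  finally have I3: "(\<integral>\<^sup>+x. S x \<partial>\<mu>) \<le> ennreal (m * 2 ^ (j0 + 3) / 64 * 2)" .
  have "ennreal (ss j0) + ennreal (m * 2 ^ (j0 + 3) / 64 * 2) = ennreal (ss j0 + m * 2 ^ (j0 + 3) / 64 * 2)"
    using ss_pos[of j0] m_pos by (intro ennreal_plus[symmetric]) auto
  moreover have "(\<integral>\<^sup>+x. ennreal (normK n K x) \<partial>\<mu>) \<le> ennreal (ss j0) + ennreal (m * 2 ^ (j0 + 3) / 64 * 2)"
    using I1 I3 unfolding I2a I2b by (meson add_left_mono order_trans)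
  ultimately show ?thesis by simp
qed

lemma E_bound: assumes int: "integrable \<mu> (normK n K)"
  shows "(\<integral>x. normK n K x \<partial>\<mu>) \<le> 2 ^ 257 * m"
proof -
  obtain k0 where k0: "k0 < 128" "pp (1 + 2 * k0) + pp (1 + 2 * k0 + 1) \<le> 1/64"
    using exists_j0 by blast
  define j0 where "j0 = 1 + 2 * k0"
  have j0: "1 \<le> j0" "j0 \<le> 255" using k0 by (auto simp: j0_def)
  have dec: "pp (j0 + 2 * k) + pp (j0 + 2 * k + 1) \<le> (1/8) ^ k * (1/64)" for k
    using pp_decay[OF j0(1)] k0 by (simp add: j0_def)
  have "ennreal (\<integral>x. normK n K x \<partial>\<mu>) = (\<integral>\<^sup>+x. ennreal (normK n K x) \<partial>\<mu>)"
  proof (rule nn_integral_eq_integral[symmetric, OF int])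
    show "AE x in \<mu>. 0 \<le> normK n K x" by (rule AE_I2) (simp add: space_mu normK_nonneg)
  qed
  also have "\<dots> \<le> ennreal (ss j0 + m * 2 ^ (j0 + 3) / 64 * 2)" by (rule nn_bound[OF j0(1) dec])
  finally have E0: "ennreal (\<integral>x. normK n K x \<partial>\<mu>) \<le> ennreal (ss j0 + m * 2 ^ (j0 + 3) / 64 * 2)" .
  have B0: "0 \<le> ss j0 + m * 2 ^ (j0 + 3) / 64 * 2" using ss_pos[of j0] m_pos by simp
  have E1: "(\<integral>x. normK n K x \<partial>\<mu>) \<le> ss j0 + m * 2 ^ (j0 + 3) / 64 * 2"
    using E0 ennreal_le_iff[OF B0] by blast
  have "(2::real) ^ 1 \<le> 2 ^ j0" using j0(1) by (intro power_increasing) auto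
  then have p1: "(2::real) \<le> 2 ^ j0" by simp
  have "ss j0 + m * 2 ^ (j0 + 3) / 64 * 2 = m * (2 + 2 ^ j0 + 2 ^ j0 / 4)"
    by (simp add: ss_def power_add field_simps)
  also have "\<dots> \<le> m * (4 * 2 ^ j0)" using p1 m_pos by (intro mult_left_mono) auto
  also have "\<dots> \<le> m * 2 ^ 257"
  proof (rule mult_left_mono)
    have "4 * (2::real) ^ j0 = 2 ^ (j0 + 2)" by (simp add: power_add)
    also have "(2::real) ^ (j0 + 2) \<le> 2 ^ 257" by (rule power_increasing) (use j0 in auto)
    finally show "4 * (2::real) ^ j0 \<le> 2 ^ 257" .
  qed (use m_pos in auto)
  finally have "ss j0 + m * 2 ^ (j0 + 3) / 64 * 2 \<le> m * 2 ^ 257" .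
  then show ?thesis using E1 by (simp only: mult.commute)
qed

end

context lcm begin

interpretation P: prob_space \<mu> by (rule prob)

lemma beta_part: "(1 / (16 * 2 ^ 257)) / sqrt (betaK n \<mu> K) \<le> 2 * (m * f)"
proof -
  define E where "E = (\<integral>x. normK n K x \<partial>\<mu>)"
  define V where "V = (\<integral>x. (normK n K x - E)\<^sup>2 \<partial>\<mu>)"
  define c :: real where "c = 1 / (16 * 2 ^ 257)"
  have c0: "c > 0" by (simp add: c_def)
  have beta: "betaK n \<mu> K = V / E\<^sup>2" by (simp add: betaK_def E_def V_def Let_def)
  have mf: "0 \<le> 2 * (m * f)" using m_pos f_nonneg by simp
  show ?thesis
  proof (cases "betaK n \<mu> K > 0")
    case False
    then have "sqrt (betaK n \<mu> K) \<le> 0" by simp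
    then have "c / sqrt (betaK n \<mu> K) \<le> 0" using c0 by (simp add: divide_nonneg_nonpos)
    then show ?thesis using mf unfolding c_def[symmetric] by linarith
  next
    case True
    then have E0: "E \<noteq> 0" and V0: "V \<noteq> 0" using beta by auto
    have intE: "integrable \<mu> (normK n K)"
      using E0 unfolding E_def by (metis not_integrable_integral_eq)
    have intV: "integrable \<mu> (\<lambda>x. (normK n K x - E)\<^sup>2)"
      using V0 unfolding V_def by (metis not_integrable_integral_eq)
    have Enn: "E \<ge> 0" unfolding E_def by (rule integral_nonneg_AE, rule AE_I2) (simp add: space_mu normK_nonneg)
    then have Epos: "E > 0" using E0 by simp
    have Vb: "V \<ge> (1 / (32 * f))\<^sup>2" unfolding V_def by (rule var_bound[OF intV])
    have Vpos: "V > 0" using Vb f_pos by (smt (verit) zero_less_power2 divide_pos_pos)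
    have sV: "sqrt V \<ge> 1 / (32 * f)"
    proof -
      have "sqrt ((1 / (32 * f))\<^sup>2) \<le> sqrt V" using Vb by (rule real_sqrt_le_mono)
      then show ?thesis using f_pos by simp
    qed
    have sb: "sqrt (betaK n \<mu> K) = sqrt V / E" using Epos Vpos by (simp add: beta real_sqrt_divide)
    have EB: "E \<le> 2 ^ 257 * m" unfolding E_def by (rule E_bound[OF intE])
    have "c / sqrt (betaK n \<mu> K) = c * E / sqrt V" using Epos by (simp add: sb)
    also have "\<dots> \<le> c * (2 ^ 257 * m) / sqrt V"
      using EB c0 Vpos by (intro divide_right_mono mult_left_mono) auto
    also have "c * (2 ^ 257 * m) = m / 16" by (simp add: c_def)
    also have "m / 16 / sqrt V \<le> m / 16 / (1 / (32 * f))"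
    proof (rule divide_left_mono)
      show "1 / (32 * f) \<le> sqrt V" by (rule sV)
      show "0 \<le> m / 16" using m_pos by simp
      show "0 < sqrt V * (1 / (32 * f))" using Vpos f_pos by simp
    qed
    also have "m / 16 / (1 / (32 * f)) = 2 * (m * f)" by simp
    finally show ?thesis by (simp add: c_def)
  qed
qed

end

theorem theorem5p7:
  "\<exists>c>0. \<forall>n K \<mu> m f.
     1 \<le> n \<and> sym_convex_body n K \<and> log_concave_measure n \<mu> \<and>
     absolutely_continuous (LebN n) \<mu> \<and> is_median n \<mu> K m \<and>
     (FK n \<mu> K has_real_derivative f) (at m)
   \<longrightarrow>
     (\<forall>\<epsilon>::real. 0 < \<epsilon> \<and> \<epsilon> < 1 \<longrightarrow>
        FK n \<mu> K ((1 - \<epsilon>) * m) \<le> 1/2 * exp (- 2 * \<epsilon> * (m * f)) \<and>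
        1/2 * exp (- 2 * \<epsilon> * (m * f)) \<le> 1/2 * exp (- c * \<epsilon> / sqrt (betaK n \<mu> K)))
   \<and>
     (B_property n \<mu> K \<and> measure \<mu> K \<le> 1/2 \<longrightarrow>
       (\<forall>\<epsilon>::real. 0 < \<epsilon> \<and> \<epsilon> < 1 \<longrightarrow>
          measure \<mu> (vscale n \<epsilon> ` K) \<le> \<epsilon> powr (2 * f) * measure \<mu> K \<and>
          \<epsilon> powr (2 * f) * measure \<mu> K
            \<le> \<epsilon> powr (1 / (16 * (\<integral>x. \<bar>normK n K x - m\<bar> \<partial>\<mu>))) * measure \<mu> K \<and>
          FK n \<mu> K (\<epsilon> * m) \<le> 1/2 * \<epsilon> powr (2 * (m * f)) \<and>
          1/2 * \<epsilon> powr (2 * (m * f)) \<le> 1/2 * \<epsilon> powr (c / sqrt (betaK n \<mu> K))))"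
proof (intro exI[of _ "1 / (16 * 2 ^ 257) :: real"] conjI allI impI)
  show "(0::real) < 1 / (16 * 2 ^ 257)" by simp
  fix n K \<mu> m f
  assume H: "1 \<le> n \<and> sym_convex_body n K \<and> log_concave_measure n \<mu> \<and>
     absolutely_continuous (LebN n) \<mu> \<and> is_median n \<mu> K m \<and>
     (FK n \<mu> K has_real_derivative f) (at m)"
  interpret L: lcm n K \<mu> m f
    by unfold_locales (use H in auto)
  define c :: real where "c = 1 / (16 * 2 ^ 257)"
  have cb: "c / sqrt (betaK n \<mu> K) \<le> 2 * (m * f)" unfolding c_def by (rule L.beta_part)
  {
    fix \<epsilon> :: real assume e: "0 < \<epsilon> \<and> \<epsilon> < 1"
    show "FK n \<mu> K ((1 - \<epsilon>) * m) \<le> 1/2 * exp (- 2 * \<epsilon> * (m * f))"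
      using e by (intro L.partA1) auto
    have "\<epsilon> * (c / sqrt (betaK n \<mu> K)) \<le> \<epsilon> * (2 * (m * f))" using e cb by (intro mult_left_mono) auto
    then have "- 2 * \<epsilon> * (m * f) \<le> - c * \<epsilon> / sqrt (betaK n \<mu> K)" by (simp add: algebra_simps)
    then show "1/2 * exp (- 2 * \<epsilon> * (m * f)) \<le> 1/2 * exp (- (1 / (16 * 2 ^ 257)) * \<epsilon> / sqrt (betaK n \<mu> K))"
      by (simp add: c_def)
  }
  assume B: "B_property n \<mu> K \<and> measure \<mu> K \<le> 1/2"
  fix \<epsilon> :: real assume e: "0 < \<epsilon> \<and> \<epsilon> < 1"
  show "measure \<mu> (vscale n \<epsilon> ` K) \<le> \<epsilon> powr (2 * f) * measure \<mu> K"
    using B e by (intro L.partB1) auto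
  show "\<epsilon> powr (2 * f) * measure \<mu> K \<le> \<epsilon> powr (1 / (16 * (\<integral>x. \<bar>normK n K x - m\<bar> \<partial>\<mu>))) * measure \<mu> K"
    using e by (intro L.partB2) auto
  show "FK n \<mu> K (\<epsilon> * m) \<le> 1/2 * \<epsilon> powr (2 * (m * f))"
    using B e by (intro L.partB3) auto
  have "\<epsilon> powr (2 * (m * f)) \<le> \<epsilon> powr (c / sqrt (betaK n \<mu> K))"
    using e cb by (intro powr_mono') auto
  then show "1/2 * \<epsilon> powr (2 * (m * f)) \<le> 1/2 * \<epsilon> powr (1 / (16 * 2 ^ 257) / sqrt (betaK n \<mu> K))"
    by (simp add: c_def)
qed

end
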